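(* Let $0\le r_A,r_B\le n$ with $m=r_A+r_B-n\ge1$, $a=n-r_A\ge1$, $b=n-r_B\ge1$, let $p,q,r\in\mathbb R$, let $S\in\mathbb C^{m\times m}$ be invertible self-adjoint, and set $P=pF_{m\times b}$, $Q=qF_{a\times b}$, $R=rF_{a\times m}$. Consider the vertex coupling given by the PQRS-form $B_{PQRS}\Psi'=A_{PQRS}\Psi$ with scattering matrix $\mathcal S(k)$. Split the edge indices into blocks $\{1\}=\{1,\dots,m\}$, $\{2\}=\{m+1,\dots,m+a\}$, $\{3\}=\{m+a+1,\dots,n\}$. Put $l_p=(n-r_B)(r_A+r_B-n)$, $l_q=(n-r_B)(n-r_A)$, $l_r=(n-r_A)(r_A+r_B-n)$, $D_\infty=1+l_p|p|^2+l_q|q-mrp|^2$ and $D_0=1+l_r|r|^2+l_q|q|^2$. Then for every $i\in\{\mu\}$, $j\in\{\nu\}$ the limits of $|\mathcal S(k)_{ij}|$ depend only on the blocks, and $$\lim_{k\to\infty}|\mathcal S_{\{1\}\{2\}}(k)|=\frac{2(n-r_B)|p|\,|q-mrp|}{D_\infty},\quad \lim_{k\to\infty}|\mathcal S_{\{2\}\{3\}}(k)|=\frac{2|q-mrp|}{D_\infty},\quad \lim_{k\to\infty}|\mathcal S_{\{3\}\{1\}}(k)|=\frac{2|p|}{D_\infty},$$ $$\lim_{k\to0^+}|\mathcal S_{\{1\}\{2\}}(k)|=\frac{2|r|}{D_0},\quad \lim_{k\to0^+}|\mathcal S_{\{2\}\{3\}}(k)|=\frac{2|q|}{D_0},\quad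 \lim_{k\to0^+}|\mathcal S_{\{3\}\{1\}}(k)|=\frac{2(n-r_A)|r|\,|q|}{D_0}.$$
   Context: $I^{(j)}$ denotes the $j\times j$ identity matrix and $F_{u\times v}$ denotes the $u\times v$ matrix all of whose entries equal $1$. The PQRS-form boundary condition is $B_{PQRS}\Psi'=A_{PQRS}\Psi$ with $\Psi,\Psi'\in\mathbb C^n$ and (block sizes $m,a,b$) $$B_{PQRS}=\begin{pmatrix} I^{(m)} & 0 & P\\ R & I^{(a)} & Q\\ 0&0&0\end{pmatrix},\qquad A_{PQRS}=\begin{pmatrix} S & -SR^* & 0\\ 0&0&0\\ -P^* & (RP-Q)^* & I^{(b)}\end{pmatrix}.$$ Its scattering matrix is $\mathcal S(k)=-(A+\mathrm ikB)^{-1}(A-\mathrm ikB)$ for $k>0$, where $A=-A_{PQRS}$, $B=B_{PQRS}$. $\mathcal S_{\{\mu\}\{\nu\}}(k)$ denotes any entry $\mathcal S(k)_{ij}$ with $i$ in block $\{\mu\}$ and $j$ in block $\{\nu\}$. *)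

theory Defs
  imports Complex_Main "Jordan_Normal_Form.Gauss_Jordan_Elimination"
begin

definition adj :: "complex mat \<Rightarrow> complex mat" where
  "adj M = transpose_mat (map_mat cnj M)"

definition ones_mat :: "nat \<Rightarrow> nat \<Rightarrow> complex mat" where
  "ones_mat u v = mat u v (\<lambda>_. 1)"

definition blk :: "nat \<Rightarrow> nat \<Rightarrow> nat \<Rightarrow> nat" where
  "blk m a i = (if i < m then 0 else if i < m + a then 1 else 2)"

definition blk_off :: "nat \<Rightarrow> nat \<Rightarrow> nat \<Rightarrow> nat" where
  "blk_off m a u = (if u = 0 then 0 else if u = 1 then m else m + a)"

definition block3 :: "nat \<Rightarrow> nat \<Rightarrow> nat \<Rightarrow> complex mat list list \<Rightarrow> complex mat" where
  "block3 m a b M = mat (m + a + b) (m + a + b)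
     (\<lambda>(i,j). (M ! blk m a i ! blk m a j) $$ (i - blk_off m a (blk m a i), j - blk_off m a (blk m a j)))"

definition B_PQRS :: "nat \<Rightarrow> nat \<Rightarrow> nat \<Rightarrow> complex mat \<Rightarrow> complex mat \<Rightarrow> complex mat \<Rightarrow> complex mat" where
  "B_PQRS m a b P Q R = block3 m a b
     [[1\<^sub>m m, 0\<^sub>m m a, P],
      [R, 1\<^sub>m a, Q],
      [0\<^sub>m b m, 0\<^sub>m b a, 0\<^sub>m b b]]"

definition A_PQRS :: "nat \<Rightarrow> nat \<Rightarrow> nat \<Rightarrow> complex mat \<Rightarrow> complex mat \<Rightarrow> complex mat \<Rightarrow> complex mat \<Rightarrow> complex mat" where
  "A_PQRS m a b P Q R S = block3 m a b
     [[S, - (S * adj R), 0\<^sub>m m b],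
      [0\<^sub>m a m, 0\<^sub>m a a, 0\<^sub>m a b],
      [- adj P, adj (R * P - Q), 1\<^sub>m b]]"

definition minv :: "complex mat \<Rightarrow> complex mat" where
  "minv M = the (mat_inverse M)"

definition scat_PQRS ::
  "nat \<Rightarrow> nat \<Rightarrow> nat \<Rightarrow> complex mat \<Rightarrow> complex mat \<Rightarrow> complex mat \<Rightarrow> complex mat \<Rightarrow> real \<Rightarrow> complex mat" where
  "scat_PQRS m a b P Q R S k =
     (let A = - A_PQRS m a b P Q R S; B = B_PQRS m a b P Q R
      in - (minv (A + (\<i> * complex_of_real k) \<cdot>\<^sub>m B) * (A - (\<i> * complex_of_real k) \<cdot>\<^sub>m B)))"

end

theory Submission
  imports Defs "Jordan_Normal_Form.Determinant"
begin

lemma adj_carrier[simp]: "A \<in> carrier_mat r c \<Longrightarrow> adj A \<in> carrier_mat c r"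
  unfolding adj_def by auto
lemma adj_dim[simp]: "dim_row (adj A) = dim_col A" "dim_col (adj A) = dim_row A"
  unfolding adj_def by auto
lemma adj_index[simp]: "i < dim_col A \<Longrightarrow> j < dim_row A \<Longrightarrow> adj A $$ (i,j) = cnj (A $$ (j,i))"
  unfolding adj_def by auto
lemma adj_adj[simp]: "adj (adj A) = A" by (rule eq_matI) auto
lemma adj_mult: assumes "A \<in> carrier_mat r k" "B \<in> carrier_mat k c"
  shows "adj (A * B) = adj B * adj A"
  using assms by (intro eq_matI) (auto simp: scalar_prod_def cnj_sum mult.commute intro!: sum.cong)
lemma adj_add: assumes "A \<in> carrier_mat r c" "B \<in> carrier_mat r c"
  shows "adj (A + B) = adj A + adj B"
  using assms by (intro eq_matI) auto
lemma adj_uminus: "adj (- A) = - adj A"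
  by (intro eq_matI) auto
lemma adj_minus: assumes "A \<in> carrier_mat r c" "B \<in> carrier_mat r c"
  shows "adj (A - B) = adj A - adj B"
  using assms by (intro eq_matI) auto
lemma adj_smult: "adj (c \<cdot>\<^sub>m A) = cnj c \<cdot>\<^sub>m adj A"
  by (intro eq_matI) auto
lemma adj_one[simp]: "adj (1\<^sub>m n) = 1\<^sub>m n"
  by (intro eq_matI) auto
lemma adj_zero[simp]: "adj (0\<^sub>m r c) = 0\<^sub>m c r"
  by (intro eq_matI) auto

lemma ones_carrier[simp]: "ones_mat u v \<in> carrier_mat u v" by (simp add: ones_mat_def)
lemma ones_dim[simp]: "dim_row (ones_mat u v) = u" "dim_col (ones_mat u v) = v" by (auto simp add: ones_mat_def)
lemma adj_ones[simp]: "adj (ones_mat u v) = ones_mat v u"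
  by (intro eq_matI) (auto simp: ones_mat_def)
lemma ones_mult: "ones_mat u v * ones_mat v w = of_nat v \<cdot>\<^sub>m ones_mat u w"
  by (intro eq_matI) (auto simp: ones_mat_def scalar_prod_def)

lemma mult_index_sum: "A \<in> carrier_mat r k \<Longrightarrow> B \<in> carrier_mat k c \<Longrightarrow> i < r \<Longrightarrow> j < c \<Longrightarrow>
  (A * B) $$ (i,j) = (\<Sum>l<k. A $$ (i,l) * B $$ (l,j))"
  by (simp add: scalar_prod_def atLeast0LessThan)

lemma minus_zero_mat'[simp]: "dim_row A = r \<Longrightarrow> dim_col A = c \<Longrightarrow> A - 0\<^sub>m r c = (A :: 'x :: group_add mat)"
  by (intro eq_matI) auto
lemma zero_minus_mat'[simp]: "dim_row A = r \<Longrightarrow> dim_col A = c \<Longrightarrow> 0\<^sub>m r c - A = - (A :: 'x :: group_add mat)"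
  by (intro eq_matI) auto

lemma smult_smult_mat[simp]: "a \<cdot>\<^sub>m (b \<cdot>\<^sub>m A) = (a * b) \<cdot>\<^sub>m (A :: 'x :: semigroup_mult mat)"
  by (intro eq_matI) (auto simp: mult.assoc)

lemma one_smult_mat'[simp]: "1 \<cdot>\<^sub>m A = (A :: 'x :: monoid_mult mat)"
  by (intro eq_matI) auto

definition sz :: "nat \<Rightarrow> nat \<Rightarrow> nat \<Rightarrow> nat \<Rightarrow> nat" where
  "sz m a b u = (if u = 0 then m else if u = 1 then a else b)"

definition B3 :: "nat \<Rightarrow> nat \<Rightarrow> nat \<Rightarrow> (nat \<Rightarrow> nat \<Rightarrow> complex mat) \<Rightarrow> complex mat" where
  "B3 m a b f = mat (m+a+b) (m+a+b) (\<lambda>(i,j). f (blk m a i) (blk m a j) $$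
      (i - blk_off m a (blk m a i), j - blk_off m a (blk m a j)))"

definition wf3 :: "nat \<Rightarrow> nat \<Rightarrow> nat \<Rightarrow> (nat \<Rightarrow> nat \<Rightarrow> complex mat) \<Rightarrow> bool" where
  "wf3 m a b f \<longleftrightarrow> (\<forall>u<3. \<forall>v<3. f u v \<in> carrier_mat (sz m a b u) (sz m a b v))"

lemma B3_carrier[simp]: "B3 m a b f \<in> carrier_mat (m+a+b) (m+a+b)"
  by (simp add: B3_def)
lemma B3_dim[simp]: "dim_row (B3 m a b f) = m+a+b" "dim_col (B3 m a b f) = m+a+b"
  by (auto simp add: B3_def)
lemma B3_index: "i < m+a+b \<Longrightarrow> j < m+a+b \<Longrightarrow> B3 m a b f $$ (i,j) = f (blk m a i) (blk m a j) $$
      (i - blk_off m a (blk m a i), j - blk_off m a (blk m a j))"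
  by (simp add: B3_def)

lemma blk_lt3: "blk m a i < 3" by (simp add: blk_def)
lemma blk_loc: "i < m+a+b \<Longrightarrow> i - blk_off m a (blk m a i) < sz m a b (blk m a i)"
  by (auto simp: blk_def blk_off_def sz_def)

lemma sum_split2: fixes h :: "nat \<Rightarrow> 'z::comm_monoid_add" shows "(\<Sum>l<x+y. h l) = (\<Sum>l<x. h l) + (\<Sum>l<y. h (x+l))"
  by (induction y) (simp_all add: ac_simps)
lemma sum_split3: fixes h :: "nat \<Rightarrow> 'z::comm_monoid_add" shows "(\<Sum>l<m+a+b. h l) = (\<Sum>l<m. h l) + (\<Sum>l<a. h (m+l)) + (\<Sum>l<b. h (m+a+l))"
  by (simp add: sum_split2)

lemma B3_cong: "(\<And>u v. u < 3 \<Longrightarrow> v < 3 \<Longrightarrow> f u v = g u v) \<Longrightarrow> B3 m a b f = B3 m a b g"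
  unfolding B3_def using blk_lt3 by (intro eq_matI) auto

lemma B3_mult: assumes f: "wf3 m a b f" and g: "wf3 m a b g"
  shows "B3 m a b f * B3 m a b g = B3 m a b (\<lambda>u v. f u 0 * g 0 v + f u 1 * g 1 v + f u 2 * g 2 v)"
proof (rule eq_matI)
  fix i j assume "i < dim_row (B3 m a b (\<lambda>u v. f u 0 * g 0 v + f u 1 * g 1 v + f u 2 * g 2 v))"
    "j < dim_col (B3 m a b (\<lambda>u v. f u 0 * g 0 v + f u 1 * g 1 v + f u 2 * g 2 v))"
  hence i: "i < m+a+b" and j: "j < m+a+b" by auto
  define u where "u = blk m a i"
  define v where "v = blk m a j"
  define i' where "i' = i - blk_off m a u"
  define j' where "j' = j - blk_off m a v"
  have u3: "u < 3" and v3: "v < 3" using blk_lt3 u_def v_def by auto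
  have i': "i' < sz m a b u" using blk_loc[OF i] unfolding i'_def u_def .
  have j': "j' < sz m a b v" using blk_loc[OF j] unfolding j'_def v_def .
  have c: "\<And>w. w < 3 \<Longrightarrow> f u w \<in> carrier_mat (sz m a b u) (sz m a b w) \<and> g w v \<in> carrier_mat (sz m a b w) (sz m a b v)"
    using f g u3 v3 unfolding wf3_def by auto
  have "(B3 m a b f * B3 m a b g) $$ (i,j) = (\<Sum>l<m+a+b. B3 m a b f $$ (i,l) * B3 m a b g $$ (l,j))"
    using i j by (simp add: scalar_prod_def atLeast0LessThan)
  also have "\<dots> = (\<Sum>l<m. f u 0 $$ (i',l) * g 0 v $$ (l,j')) + (\<Sum>l<a. f u 1 $$ (i',l) * g 1 v $$ (l,j'))
       + (\<Sum>l<b. f u 2 $$ (i',l) * g 2 v $$ (l,j'))"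
    unfolding sum_split3 using i j
    by (simp add: B3_index u_def[symmetric] v_def[symmetric] i'_def[symmetric] j'_def[symmetric])
       (simp add: blk_def blk_off_def)
  also have "\<dots> = (f u 0 * g 0 v + f u 1 * g 1 v + f u 2 * g 2 v) $$ (i',j')"
  proof -
    define su where "su = sz m a b u"
    define sv where "sv = sz m a b v"
    have c0: "f u 0 \<in> carrier_mat su m" "g 0 v \<in> carrier_mat m sv"
      using c[of 0] unfolding su_def sv_def by (auto simp: sz_def)
    have c1: "f u 1 \<in> carrier_mat su a" "g 1 v \<in> carrier_mat a sv"
      using c[of 1] unfolding su_def sv_def by (auto simp: sz_def)
    have c2: "f u 2 \<in> carrier_mat su b" "g 2 v \<in> carrier_mat b sv"
      using c[of 2] unfolding su_def sv_def by (auto simp: sz_def)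
    have ii: "i' < su" "j' < sv" using i' j' unfolding su_def sv_def by auto
    have p0: "f u 0 * g 0 v \<in> carrier_mat su sv" using c0 by auto
    have p1: "f u 1 * g 1 v \<in> carrier_mat su sv" using c1 by auto
    have p2: "f u 2 * g 2 v \<in> carrier_mat su sv" using c2 by auto
    have "(f u 0 * g 0 v + f u 1 * g 1 v + f u 2 * g 2 v) $$ (i',j') =
       (f u 0 * g 0 v) $$ (i',j') + (f u 1 * g 1 v) $$ (i',j') + (f u 2 * g 2 v) $$ (i',j')"
      using carrier_matD[OF p0] carrier_matD[OF p1] carrier_matD[OF p2] ii by (simp del: assoc_add_mat)
    also have "\<dots> = (\<Sum>l<m. f u 0 $$ (i',l) * g 0 v $$ (l,j')) + (\<Sum>l<a. f u 1 $$ (i',l) * g 1 v $$ (l,j'))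
       + (\<Sum>l<b. f u 2 $$ (i',l) * g 2 v $$ (l,j'))"
      using mult_index_sum[OF c0 ii] mult_index_sum[OF c1 ii] mult_index_sum[OF c2 ii] by simp
    finally show ?thesis by simp
  qed
  also have "\<dots> = B3 m a b (\<lambda>u v. f u 0 * g 0 v + f u 1 * g 1 v + f u 2 * g 2 v) $$ (i,j)"
    using i j by (simp add: B3_index u_def[symmetric] v_def[symmetric] i'_def[symmetric] j'_def[symmetric])
  finally show "(B3 m a b f * B3 m a b g) $$ (i,j) = B3 m a b (\<lambda>u v. f u 0 * g 0 v + f u 1 * g 1 v + f u 2 * g 2 v) $$ (i,j)" .
qed auto

definition M3 :: "'x \<Rightarrow> 'x \<Rightarrow> 'x \<Rightarrow> 'x \<Rightarrow> 'x \<Rightarrow> 'x \<Rightarrow> 'x \<Rightarrow> 'x \<Rightarrow> 'x \<Rightarrow> nat \<Rightarrow> nat \<Rightarrow> 'x" where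
 "M3 x00 x01 x02 x10 x11 x12 x20 x21 x22 u v = (if u = 0 then (if v = 0 then x00 else if v = 1 then x01 else x02)
   else if u = 1 then (if v = 0 then x10 else if v = 1 then x11 else x12)
   else (if v = 0 then x20 else if v = 1 then x21 else x22))"

lemma lt3_cases: "(u::nat) < 3 \<Longrightarrow> u = 0 \<or> u = 1 \<or> u = 2" by arith

lemma wf3_M3: assumes "x00 \<in> carrier_mat m m" "x01 \<in> carrier_mat m a" "x02 \<in> carrier_mat m b"
  "x10 \<in> carrier_mat a m" "x11 \<in> carrier_mat a a" "x12 \<in> carrier_mat a b"
  "x20 \<in> carrier_mat b m" "x21 \<in> carrier_mat b a" "x22 \<in> carrier_mat b b"
  shows "wf3 m a b (M3 x00 x01 x02 x10 x11 x12 x20 x21 x22)"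
  unfolding wf3_def sz_def M3_def using assms by auto

lemma block3_M3: "block3 m a b [[x00,x01,x02],[x10,x11,x12],[x20,x21,x22]] = B3 m a b (M3 x00 x01 x02 x10 x11 x12 x20 x21 x22)"
proof -
  have "block3 m a b [[x00,x01,x02],[x10,x11,x12],[x20,x21,x22]] = B3 m a b (\<lambda>u v. [[x00,x01,x02],[x10,x11,x12],[x20,x21,x22]] ! u ! v)"
    by (simp add: block3_def B3_def)
  also have "\<dots> = B3 m a b (M3 x00 x01 x02 x10 x11 x12 x20 x21 x22)"
    by (rule B3_cong) (auto dest!: lt3_cases simp: M3_def)
  finally show ?thesis .
qed

lemma B3_M3_mult: assumes "x00 \<in> carrier_mat m m" "x01 \<in> carrier_mat m a" "x02 \<in> carrier_mat m b"
  "x10 \<in> carrier_mat a m" "x11 \<in> carrier_mat a a" "x12 \<in> carrier_mat a b"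
  "x20 \<in> carrier_mat b m" "x21 \<in> carrier_mat b a" "x22 \<in> carrier_mat b b"
  and "y00 \<in> carrier_mat m m" "y01 \<in> carrier_mat m a" "y02 \<in> carrier_mat m b"
  "y10 \<in> carrier_mat a m" "y11 \<in> carrier_mat a a" "y12 \<in> carrier_mat a b"
  "y20 \<in> carrier_mat b m" "y21 \<in> carrier_mat b a" "y22 \<in> carrier_mat b b"
  shows "B3 m a b (M3 x00 x01 x02 x10 x11 x12 x20 x21 x22) * B3 m a b (M3 y00 y01 y02 y10 y11 y12 y20 y21 y22) =
    B3 m a b (M3 (x00 * y00 + x01 * y10 + x02 * y20) (x00 * y01 + x01 * y11 + x02 * y21) (x00 * y02 + x01 * y12 + x02 * y22)
                 (x10 * y00 + x11 * y10 + x12 * y20) (x10 * y01 + x11 * y11 + x12 * y21) (x10 * y02 + x11 * y12 + x12 * y22)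
                 (x20 * y00 + x21 * y10 + x22 * y20) (x20 * y01 + x21 * y11 + x22 * y21) (x20 * y02 + x21 * y12 + x22 * y22))"
  unfolding B3_mult[OF wf3_M3[OF assms(1-9)] wf3_M3[OF assms(10-18)]]
  by (rule B3_cong) (auto dest!: lt3_cases simp: M3_def)

lemma B3_M3_add: assumes 
  "y00 \<in> carrier_mat m m" "y01 \<in> carrier_mat m a" "y02 \<in> carrier_mat m b"
  "y10 \<in> carrier_mat a m" "y11 \<in> carrier_mat a a" "y12 \<in> carrier_mat a b"
  "y20 \<in> carrier_mat b m" "y21 \<in> carrier_mat b a" "y22 \<in> carrier_mat b b"
  shows "B3 m a b (M3 x00 x01 x02 x10 x11 x12 x20 x21 x22) + B3 m a b (M3 y00 y01 y02 y10 y11 y12 y20 y21 y22) =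
    B3 m a b (M3 (x00 + y00) (x01 + y01) (x02 + y02) (x10 + y10) (x11 + y11) (x12 + y12) (x20 + y20) (x21 + y21) (x22 + y22))"
proof (rule eq_matI)
  fix i j assume "i < dim_row (B3 m a b (M3 (x00 + y00) (x01 + y01) (x02 + y02) (x10 + y10) (x11 + y11) (x12 + y12) (x20 + y20) (x21 + y21) (x22 + y22)))"
    "j < dim_col (B3 m a b (M3 (x00 + y00) (x01 + y01) (x02 + y02) (x10 + y10) (x11 + y11) (x12 + y12) (x20 + y20) (x21 + y21) (x22 + y22)))"
  hence i: "i < m+a+b" and j: "j < m+a+b" by auto
  have w: "wf3 m a b (M3 y00 y01 y02 y10 y11 y12 y20 y21 y22)" by (rule wf3_M3[OF assms])
  have l: "i - blk_off m a (blk m a i) < sz m a b (blk m a i)" "j - blk_off m a (blk m a j) < sz m a b (blk m a j)"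
    using blk_loc i j by auto
  have c: "M3 y00 y01 y02 y10 y11 y12 y20 y21 y22 (blk m a i) (blk m a j) \<in> carrier_mat (sz m a b (blk m a i)) (sz m a b (blk m a j))"
    using w blk_lt3 unfolding wf3_def by auto
  show "(B3 m a b (M3 x00 x01 x02 x10 x11 x12 x20 x21 x22) + B3 m a b (M3 y00 y01 y02 y10 y11 y12 y20 y21 y22)) $$ (i,j) =
    B3 m a b (M3 (x00 + y00) (x01 + y01) (x02 + y02) (x10 + y10) (x11 + y11) (x12 + y12) (x20 + y20) (x21 + y21) (x22 + y22)) $$ (i,j)"
    using i j l c unfolding B3_index[OF i j] by (simp add: B3_index M3_def split: if_splits)
qed auto

lemma B3_adj: assumes w: "wf3 m a b f"
  shows "adj (B3 m a b f) = B3 m a b (\<lambda>u v. adj (f v u))"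
proof (rule eq_matI)
  fix i j assume "i < dim_row (B3 m a b (\<lambda>u v. adj (f v u)))" "j < dim_col (B3 m a b (\<lambda>u v. adj (f v u)))"
  hence i: "i < m+a+b" and j: "j < m+a+b" by auto
  have l: "i - blk_off m a (blk m a i) < sz m a b (blk m a i)" "j - blk_off m a (blk m a j) < sz m a b (blk m a j)"
    using blk_loc i j by auto
  have c: "f (blk m a j) (blk m a i) \<in> carrier_mat (sz m a b (blk m a j)) (sz m a b (blk m a i))"
    using w blk_lt3 unfolding wf3_def by auto
  show "adj (B3 m a b f) $$ (i,j) = B3 m a b (\<lambda>u v. adj (f v u)) $$ (i,j)"
    using i j l c by (simp add: B3_index)
qed auto

lemma B3_M3_adj: assumes "x00 \<in> carrier_mat m m" "x01 \<in> carrier_mat m a" "x02 \<in> carrier_mat m b"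
  "x10 \<in> carrier_mat a m" "x11 \<in> carrier_mat a a" "x12 \<in> carrier_mat a b"
  "x20 \<in> carrier_mat b m" "x21 \<in> carrier_mat b a" "x22 \<in> carrier_mat b b"
  shows "adj (B3 m a b (M3 x00 x01 x02 x10 x11 x12 x20 x21 x22)) =
    B3 m a b (M3 (adj x00) (adj x10) (adj x20) (adj x01) (adj x11) (adj x21) (adj x02) (adj x12) (adj x22))"
  unfolding B3_adj[OF wf3_M3[OF assms]]
  by (rule B3_cong) (auto dest!: lt3_cases simp: M3_def)

lemma B3_M3_one: "1\<^sub>m (m+a+b) = B3 m a b (M3 (1\<^sub>m m) (0\<^sub>m m a) (0\<^sub>m m b) (0\<^sub>m a m) (1\<^sub>m a) (0\<^sub>m a b) (0\<^sub>m b m) (0\<^sub>m b a) (1\<^sub>m b))"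
  by (intro eq_matI) (auto simp: B3_index M3_def blk_def blk_off_def)

lemma B3_M3_zero: "0\<^sub>m (m+a+b) (m+a+b) = B3 m a b (M3 (0\<^sub>m m m) (0\<^sub>m m a) (0\<^sub>m m b) (0\<^sub>m a m) (0\<^sub>m a a) (0\<^sub>m a b) (0\<^sub>m b m) (0\<^sub>m b a) (0\<^sub>m b b))"
  by (intro eq_matI) (auto simp: B3_index M3_def blk_def blk_off_def)


lemma gen_ST:
  fixes K Sg Om Pi Mi :: "complex mat" and z w :: complex
  assumes cK: "K \<in> carrier_mat N N" and cS: "Sg \<in> carrier_mat N N" and cO: "Om \<in> carrier_mat N N"
    and cP: "Pi \<in> carrier_mat N N" and cM: "Mi \<in> carrier_mat N N"
    and zw: "z * w = 1"
    and h1: "Pi * K = 0\<^sub>m N N" "Pi * Sg = 0\<^sub>m N N" "Pi * Pi = Pi"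
    and h2: "Om * adj K = 0\<^sub>m N N" "Sg * adj K = Sg" "Sg * Pi = 0\<^sub>m N N" "Om * Pi = Pi"
    and M1: "(K * adj K + Pi - w \<cdot>\<^sub>m Sg) * Mi = 1\<^sub>m N"
    and M2: "Mi * (K * adj K + Pi - w \<cdot>\<^sub>m Sg) = 1\<^sub>m N"
  shows "(z \<cdot>\<^sub>m K - Sg - Om) * (w \<cdot>\<^sub>m (adj K * Mi) - Pi + adj K * Mi * K * Pi) = 1\<^sub>m N"
    and "(z \<cdot>\<^sub>m K - Sg - Om) * (- 1\<^sub>m N + 2 \<cdot>\<^sub>m (adj K * Mi * K)) = z \<cdot>\<^sub>m K + Sg + Om"
proof -
  have cKa: "adj K \<in> carrier_mat N N" using cK by simp
  note dims[simp] = carrier_matD[OF cK] carrier_matD[OF cS] carrier_matD[OF cO] carrier_matD[OF cP]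
    carrier_matD[OF cM] carrier_matD[OF cKa]
  have mc: "\<And>(A::complex mat) B. A \<in> carrier_mat N N \<Longrightarrow> B \<in> carrier_mat N N \<Longrightarrow> A * B \<in> carrier_mat N N"
    "\<And>A B. B \<in> carrier_mat N N \<Longrightarrow> A + B \<in> carrier_mat N N"
    "\<And>A B. B \<in> carrier_mat N N \<Longrightarrow> A - B \<in> carrier_mat N N"
    "\<And>A c. A \<in> carrier_mat N N \<Longrightarrow> c \<cdot>\<^sub>m A \<in> carrier_mat N N"
    "\<And>A. A \<in> carrier_mat N N \<Longrightarrow> - A \<in> carrier_mat N N"
    by (auto intro: minus_carrier_mat)
  have dl1: "\<And>(A::complex mat) B C. A \<in> carrier_mat N N \<Longrightarrow> B \<in> carrier_mat N N \<Longrightarrow> C \<in> carrier_mat N N \<Longrightarrow> A * (B + C) = A * B + A * C"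
    by (rule mult_add_distrib_mat)
  have dl2: "\<And>(A::complex mat) B C. A \<in> carrier_mat N N \<Longrightarrow> B \<in> carrier_mat N N \<Longrightarrow> C \<in> carrier_mat N N \<Longrightarrow> A * (B - C) = A * B - A * C"
    by (rule mult_minus_distrib_mat)
  have dl3: "\<And>(A::complex mat) B C. A \<in> carrier_mat N N \<Longrightarrow> B \<in> carrier_mat N N \<Longrightarrow> C \<in> carrier_mat N N \<Longrightarrow> (B + C) * A = B * A + C * A"
    by (rule add_mult_distrib_mat) 
  have dl4: "\<And>(A::complex mat) B C. A \<in> carrier_mat N N \<Longrightarrow> B \<in> carrier_mat N N \<Longrightarrow> C \<in> carrier_mat N N \<Longrightarrow> (B - C) * A = B * A - C * A"
    by (rule minus_mult_distrib_mat)
  have dl5: "\<And>(A::complex mat) B c. A \<in> carrier_mat N N \<Longrightarrow> B \<in> carrier_mat N N \<Longrightarrow> A * (c \<cdot>\<^sub>m B) = c \<cdot>\<^sub>m (A * B)"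
    by (rule mult_smult_distrib)
  have dl6: "\<And>(A::complex mat) B c. A \<in> carrier_mat N N \<Longrightarrow> B \<in> carrier_mat N N \<Longrightarrow> (c \<cdot>\<^sub>m A) * B = c \<cdot>\<^sub>m (A * B)"
    by (rule mult_smult_assoc_mat)
  have dl7: "\<And>(A::complex mat) B C. A \<in> carrier_mat N N \<Longrightarrow> B \<in> carrier_mat N N \<Longrightarrow> C \<in> carrier_mat N N \<Longrightarrow> A * B * C = A * (B * C)"
    by (rule assoc_mult_mat)
  have dl8: "\<And>(A::complex mat) B. A \<in> carrier_mat N N \<Longrightarrow> B \<in> carrier_mat N N \<Longrightarrow> - A * B = - (A * B)"
    "\<And>(A::complex mat) B. A \<in> carrier_mat N N \<Longrightarrow> B \<in> carrier_mat N N \<Longrightarrow> A * - B = - (A * B)"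
    by (intro eq_matI; auto simp: scalar_prod_def sum_negf)+
  note dl = dl1 dl2 dl3 dl4 dl5 dl6 dl7 dl8
  define M where "M = K * adj K + Pi - w \<cdot>\<^sub>m Sg"
  define C where "C = z \<cdot>\<^sub>m K - Sg - Om"
  have cMM: "M \<in> carrier_mat N N" unfolding M_def using cK cP cS by (auto intro!: minus_carrier_mat)
  have cC: "C \<in> carrier_mat N N" unfolding C_def using cK cO cS by (auto intro!: minus_carrier_mat)
  have PM: "Pi * M = Pi"
  proof -
    have "Pi * M = Pi * (K * adj K) + Pi * Pi - w \<cdot>\<^sub>m (Pi * Sg)"
      unfolding M_def using cK cP cS cKa
      by (simp add: dl mc)
    also have "Pi * (K * adj K) = 0\<^sub>m N N"
      using dl7[OF cP cK cKa, symmetric] h1(1) cKa by simp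
    finally show ?thesis using h1 cP by simp
  qed
  have PMi: "Pi * Mi = Pi"
  proof -
    have "Pi * Mi = (Pi * M) * Mi" using PM by simp
    also have "\<dots> = Pi * (M * Mi)" using cP cMM cM by simp
    finally show ?thesis using M1 cP unfolding M_def by simp
  qed
  have zw': "\<And>s. z * (w * s) = s" using zw by (simp add: mult.assoc[symmetric])
  have CK: "C * adj K = z \<cdot>\<^sub>m (M - Pi)"
  proof -
    have "C * adj K = z \<cdot>\<^sub>m (K * adj K) - Sg * adj K - Om * adj K"
      unfolding C_def using cK cS cO cKa
      by (simp add: dl mc)
    also have "\<dots> = z \<cdot>\<^sub>m (K * adj K) - Sg" using h2 cS by simp
    also have "\<dots> = z \<cdot>\<^sub>m (M - Pi)"
      unfolding M_def using cK cS cP 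
      by (intro eq_matI) (simp_all add: right_diff_distrib zw')
    finally show ?thesis .
  qed
  have CKM: "C * adj K * Mi = z \<cdot>\<^sub>m (1\<^sub>m N - Pi)"
  proof -
    have "C * adj K * Mi = z \<cdot>\<^sub>m ((M - Pi) * Mi)" using CK cMM cP cM
      by (simp add: dl mc)
    also have "(M - Pi) * Mi = 1\<^sub>m N - Pi" using cMM cP cM M1 PMi unfolding M_def
      by (simp add: dl mc)
    finally show ?thesis .
  qed
  have CP: "C * Pi = z \<cdot>\<^sub>m (K * Pi) - Pi"
    unfolding C_def using cK cS cO cP h2
    by (simp add: dl mc)
  have IPK: "(1\<^sub>m N - Pi) * K = K"
    using cK cP h1 by (simp add: dl mc)
  have IPKP: "(1\<^sub>m N - Pi) * (K * Pi) = K * Pi"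
    using cK cP h1 dl7[OF cP cK cP, symmetric] by (simp add: dl mc)
  show "(z \<cdot>\<^sub>m K - Sg - Om) * (w \<cdot>\<^sub>m (adj K * Mi) - Pi + adj K * Mi * K * Pi) = 1\<^sub>m N"
  proof -
    have "C * (w \<cdot>\<^sub>m (adj K * Mi) - Pi + adj K * Mi * K * Pi)
       = w \<cdot>\<^sub>m (C * adj K * Mi) - C * Pi + (C * adj K * Mi) * (K * Pi)"
      using cC cKa cM cK cP
      by (simp add: dl mc)
    also have "(C * adj K * Mi) * (K * Pi) = z \<cdot>\<^sub>m (K * Pi)"
      unfolding CKM using IPKP cK cP by (simp add: dl mc)
    also have "w \<cdot>\<^sub>m (C * adj K * Mi) - C * Pi + z \<cdot>\<^sub>m (K * Pi) = 1\<^sub>m N"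
      unfolding CKM CP using cK cP
      by (intro eq_matI) (simp_all add: right_diff_distrib zw' mult.assoc[symmetric] mult.commute[of w z] zw)
    finally show ?thesis unfolding C_def .
  qed
  show "(z \<cdot>\<^sub>m K - Sg - Om) * (- 1\<^sub>m N + 2 \<cdot>\<^sub>m (adj K * Mi * K)) = z \<cdot>\<^sub>m K + Sg + Om"
  proof -
    have "C * (- 1\<^sub>m N + 2 \<cdot>\<^sub>m (adj K * Mi * K)) = - C + 2 \<cdot>\<^sub>m (C * adj K * Mi * K)"
      using cC cKa cM cK
      by (simp add: dl mc)
    also have "C * adj K * Mi * K = z \<cdot>\<^sub>m K"
      unfolding CKM using IPK cK cP by (simp add: dl mc)
    also have "- C + 2 \<cdot>\<^sub>m (z \<cdot>\<^sub>m K) = z \<cdot>\<^sub>m K + Sg + Om"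
      unfolding C_def using cK cP cS cO
      by (intro eq_matI) (simp_all add: algebra_simps)
    finally show ?thesis unfolding C_def .
  qed
qed


lemma det_tendsto:
  fixes Mf :: "'b \<Rightarrow> complex mat"
  assumes c: "\<And>k. Mf k \<in> carrier_mat n n" and cG: "G \<in> carrier_mat n n"
    and t: "\<And>i j. i < n \<Longrightarrow> j < n \<Longrightarrow> ((\<lambda>k. Mf k $$ (i,j)) \<longlongrightarrow> G $$ (i,j)) F"
  shows "((\<lambda>k. det (Mf k)) \<longlongrightarrow> det G) F"
proof -
  have e: "(\<lambda>k. det (Mf k)) = (\<lambda>k. \<Sum>p\<in>{p. p permutes {0..<n}}. signof p * (\<Prod>i = 0..<n. Mf k $$ (i, p i)))"
    using det_def'[OF c] by auto
  show ?thesis unfolding e det_def'[OF cG]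
  proof (intro tendsto_sum tendsto_mult tendsto_const tendsto_prod)
    fix p i assume "p \<in> {p. p permutes {0..<n}}" "i \<in> {0..<n}"
    hence "i < n" "p i < n" using permutes_in_image[of p "{0..<n}" i] by auto
    thus "((\<lambda>k. Mf k $$ (i, p i)) \<longlongrightarrow> G $$ (i, p i)) F" using t by auto
  qed
qed

lemma mat_delete_idx: "A \<in> carrier_mat n n \<Longrightarrow> i' < n - 1 \<Longrightarrow> j' < n - 1 \<Longrightarrow>
  mat_delete A j i $$ (i',j') = A $$ (if i' < j then i' else Suc i', if j' < i then j' else Suc j')"
  unfolding mat_delete_def by auto

lemma adj_mat_tendsto:
  fixes Mf :: "'b \<Rightarrow> complex mat"
  assumes c: "\<And>k. Mf k \<in> carrier_mat n n" and cG: "G \<in> carrier_mat n n"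
    and t: "\<And>i j. i < n \<Longrightarrow> j < n \<Longrightarrow> ((\<lambda>k. Mf k $$ (i,j)) \<longlongrightarrow> G $$ (i,j)) F"
    and ij: "i < n" "j < n"
  shows "((\<lambda>k. adj_mat (Mf k) $$ (i,j)) \<longlongrightarrow> adj_mat G $$ (i,j)) F"
proof -
  have e: "\<And>A. A \<in> carrier_mat n n \<Longrightarrow> adj_mat A $$ (i,j) = (-1)^(j+i) * det (mat_delete A j i)"
    using ij by (simp add: adj_mat_def cofactor_def)
  have "((\<lambda>k. det (mat_delete (Mf k) j i)) \<longlongrightarrow> det (mat_delete G j i)) F"
  proof (rule det_tendsto[of _ "n - 1"])
    show "\<And>k. mat_delete (Mf k) j i \<in> carrier_mat (n - 1) (n - 1)" using mat_delete_carrier[OF c] by simp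
    show "mat_delete G j i \<in> carrier_mat (n - 1) (n - 1)" using mat_delete_carrier[OF cG] by simp
    fix i' j' assume "i' < n - 1" "j' < n - 1"
    thus "((\<lambda>k. mat_delete (Mf k) j i $$ (i', j')) \<longlongrightarrow> mat_delete G j i $$ (i', j')) F"
      using mat_delete_idx[OF c] mat_delete_idx[OF cG] t by auto
  qed
  thus ?thesis unfolding e[OF c] e[OF cG] by (intro tendsto_mult tendsto_const)
qed

lemma inv_tendsto:
  fixes Mf :: "'b \<Rightarrow> complex mat"
  assumes c: "\<And>k. Mf k \<in> carrier_mat n n" and cG: "G \<in> carrier_mat n n"
    and t: "\<And>i j. i < n \<Longrightarrow> j < n \<Longrightarrow> ((\<lambda>k. Mf k $$ (i,j)) \<longlongrightarrow> G $$ (i,j)) F"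
    and cGi: "Gi \<in> carrier_mat n n" and GGi: "G * Gi = 1\<^sub>m n"
  shows "\<forall>\<^sub>F k in F. det (Mf k) \<noteq> 0"
    and "\<And>i j. i < n \<Longrightarrow> j < n \<Longrightarrow> ((\<lambda>k. ((1 / det (Mf k)) \<cdot>\<^sub>m adj_mat (Mf k)) $$ (i,j)) \<longlongrightarrow> Gi $$ (i,j)) F"
proof -
  have dG: "det G \<noteq> 0" using det_mult[OF cG cGi] GGi by auto
  have td: "((\<lambda>k. det (Mf k)) \<longlongrightarrow> det G) F" by (rule det_tendsto[OF c cG t])
  show "\<forall>\<^sub>F k in F. det (Mf k) \<noteq> 0" using tendsto_imp_eventually_ne[OF td dG] .
  have Gi: "Gi = (1 / det G) \<cdot>\<^sub>m adj_mat G"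
  proof -
    have cA: "adj_mat G \<in> carrier_mat n n" using adj_mat(1)[OF cG] .
    have "(1 / det G) \<cdot>\<^sub>m adj_mat G = (1 / det G) \<cdot>\<^sub>m (adj_mat G * (G * Gi))"
      using GGi cA by simp
    also have "adj_mat G * (G * Gi) = (adj_mat G * G) * Gi" using cA cG cGi by simp
    also have "\<dots> = det G \<cdot>\<^sub>m Gi" using adj_mat(3)[OF cG] cGi mult_smult_assoc_mat[of "1\<^sub>m n" n n Gi n "det G"] by simp
    finally show ?thesis using dG by simp
  qed
  fix i j assume ij: "i < n" "j < n"
  have "((\<lambda>k. (1 / det (Mf k)) * adj_mat (Mf k) $$ (i,j)) \<longlongrightarrow> (1 / det G) * adj_mat G $$ (i,j)) F"
    by (intro tendsto_mult tendsto_divide tendsto_const td adj_mat_tendsto[OF c cG t ij] dG)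
  moreover have "\<And>k. ((1 / det (Mf k)) \<cdot>\<^sub>m adj_mat (Mf k)) $$ (i,j) = (1 / det (Mf k)) * adj_mat (Mf k) $$ (i,j)"
    using carrier_matD[OF adj_mat(1)[OF c]] ij by simp
  moreover have "Gi $$ (i,j) = (1 / det G) * adj_mat G $$ (i,j)"
    using Gi carrier_matD[OF adj_mat(1)[OF cG]] ij by simp
  ultimately show "((\<lambda>k. ((1 / det (Mf k)) \<cdot>\<^sub>m adj_mat (Mf k)) $$ (i,j)) \<longlongrightarrow> Gi $$ (i,j)) F" by simp
qed

lemma inv_adj_mat:
  fixes A :: "complex mat"
  assumes c: "A \<in> carrier_mat n n" and d: "det A \<noteq> 0"
  shows "A * ((1 / det A) \<cdot>\<^sub>m adj_mat A) = 1\<^sub>m n" "((1 / det A) \<cdot>\<^sub>m adj_mat A) * A = 1\<^sub>m n"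
    "(1 / det A) \<cdot>\<^sub>m adj_mat A \<in> carrier_mat n n"
proof -
  have e: "1 / det A * det A = 1" using d by (simp add: field_simps)
  show "A * ((1 / det A) \<cdot>\<^sub>m adj_mat A) = 1\<^sub>m n" "((1 / det A) \<cdot>\<^sub>m adj_mat A) * A = 1\<^sub>m n"
    "(1 / det A) \<cdot>\<^sub>m adj_mat A \<in> carrier_mat n n"
  using adj_mat[OF c] c e by (auto simp: mult_smult_distrib mult_smult_assoc_mat)
qed


lemma minv_right_inv:
  fixes C W :: "complex mat"
  assumes cC: "C \<in> carrier_mat N N" and cW: "W \<in> carrier_mat N N" and CW: "C * W = 1\<^sub>m N"
  shows "minv C = W"
proof -
  have WC: "W * C = 1\<^sub>m N" by (rule mat_mult_left_right_inverse[OF cC cW CW])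
  have U: "C \<in> Units (ring_mat TYPE(complex) N undefined)"
    unfolding Units_def ring_mat_simps using cC cW CW WC by auto
  show ?thesis
  proof (cases "mat_inverse C")
    case None
    have "C \<notin> Units (ring_mat TYPE(complex) N undefined)" by (rule mat_inverse(1)[OF cC None])
    with U show ?thesis by blast
  next
    case (Some V)
    from mat_inverse(2)[OF cC Some] have VC: "V * C = 1\<^sub>m N" and cV: "V \<in> carrier_mat N N" by auto
    have "V = V * (C * W)" using CW cV by simp
    also have "\<dots> = (V * C) * W" using cV cC cW by (simp add: assoc_mult_mat)
    also have "\<dots> = W" using VC cW by simp
    finally show ?thesis unfolding minv_def Some by simp
  qed
qed

lemma core_eq:
  fixes K Sg Om Pi E Ei :: "complex mat" and z w c :: complex
  assumes cK: "K \<in> carrier_mat N N" and cS: "Sg \<in> carrier_mat N N" and cO: "Om \<in> carrier_mat N N"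
    and cP: "Pi \<in> carrier_mat N N" and cE: "E \<in> carrier_mat N N" and cEi: "Ei \<in> carrier_mat N N"
    and EEi: "E * Ei = 1\<^sub>m N" and zw: "z * w = 1" and c: "c \<noteq> 0"
    and h1: "Pi * K = 0\<^sub>m N N" "Pi * Sg = 0\<^sub>m N N" "Pi * Pi = Pi"
    and h2: "Om * adj K = 0\<^sub>m N N" "Sg * adj K = Sg" "Sg * Pi = 0\<^sub>m N N" "Om * Pi = Pi"
    and d: "det (K * adj K + Pi - w \<cdot>\<^sub>m Sg) \<noteq> 0"
  shows "minv (c \<cdot>\<^sub>m (E * (z \<cdot>\<^sub>m K - Sg - Om))) * (c \<cdot>\<^sub>m (E * (z \<cdot>\<^sub>m K + Sg + Om)))
     = - 1\<^sub>m N + 2 \<cdot>\<^sub>m (adj K * ((1 / det (K * adj K + Pi - w \<cdot>\<^sub>m Sg)) \<cdot>\<^sub>m adj_mat (K * adj K + Pi - w \<cdot>\<^sub>m Sg)) * K)"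
proof -
  define M where "M = K * adj K + Pi - w \<cdot>\<^sub>m Sg"
  define Mi where "Mi = (1 / det M) \<cdot>\<^sub>m adj_mat M"
  have cM: "M \<in> carrier_mat N N" unfolding M_def using cK cP cS by (auto intro!: minus_carrier_mat)
  have Mi: "M * Mi = 1\<^sub>m N" "Mi * M = 1\<^sub>m N" "Mi \<in> carrier_mat N N"
    using inv_adj_mat[OF cM] d unfolding Mi_def M_def by auto
  have cKa: "adj K \<in> carrier_mat N N" using cK by simp
  define Z where "Z = w \<cdot>\<^sub>m (adj K * Mi) - Pi + adj K * Mi * K * Pi"
  define X where "X = - 1\<^sub>m N + 2 \<cdot>\<^sub>m (adj K * Mi * K)"
  define Cs where "Cs = z \<cdot>\<^sub>m K - Sg - Om"
  define Ds where "Ds = z \<cdot>\<^sub>m K + Sg + Om"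
  note g = gen_ST[OF cK cS cO cP Mi(3) zw h1 h2 Mi(1)[unfolded M_def] Mi(2)[unfolded M_def]]
  have CsZ: "Cs * Z = 1\<^sub>m N" using g(1) unfolding Cs_def Z_def .
  have CsX: "Cs * X = Ds" using g(2) unfolding Cs_def X_def Ds_def .
  have cCs: "Cs \<in> carrier_mat N N" unfolding Cs_def using cK cS cO by (auto intro!: minus_carrier_mat)
  have cZ: "Z \<in> carrier_mat N N" unfolding Z_def using cKa Mi(3) cK cP by (auto intro!: minus_carrier_mat)
  have cX: "X \<in> carrier_mat N N" unfolding X_def using cKa Mi(3) cK by auto
  define W where "W = (1 / c) \<cdot>\<^sub>m (Z * Ei)"
  have cW: "W \<in> carrier_mat N N" unfolding W_def using cZ cEi by auto
  have cC: "c \<cdot>\<^sub>m (E * Cs) \<in> carrier_mat N N" using cE cCs by auto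
  have "c \<cdot>\<^sub>m (E * Cs) * W = c \<cdot>\<^sub>m ((E * Cs) * ((1 / c) \<cdot>\<^sub>m (Z * Ei)))"
    unfolding W_def by (rule mult_smult_assoc_mat) (use cE cCs cZ cEi in auto)
  also have "(E * Cs) * ((1 / c) \<cdot>\<^sub>m (Z * Ei)) = (1 / c) \<cdot>\<^sub>m ((E * Cs) * (Z * Ei))"
    by (rule mult_smult_distrib) (use cE cCs cZ cEi in auto)
  also have "c \<cdot>\<^sub>m ((1 / c) \<cdot>\<^sub>m ((E * Cs) * (Z * Ei))) = (E * Cs) * (Z * Ei)"
    using c by simp
  also have "E * Cs * (Z * Ei) = E * ((Cs * Z) * Ei)"
  proof -
    have "E * Cs * (Z * Ei) = E * (Cs * (Z * Ei))" by (rule assoc_mult_mat[OF cE cCs]) (use cZ cEi in auto)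
    also have "Cs * (Z * Ei) = (Cs * Z) * Ei" by (rule assoc_mult_mat[OF cCs cZ cEi, symmetric])
    finally show ?thesis .
  qed
  also have "\<dots> = 1\<^sub>m N" using CsZ cEi EEi by simp
  finally have CW: "c \<cdot>\<^sub>m (E * Cs) * W = 1\<^sub>m N" .
  have mi: "minv (c \<cdot>\<^sub>m (E * Cs)) = W" by (rule minv_right_inv[OF cC cW CW])
  have WC: "W * (c \<cdot>\<^sub>m (E * Cs)) = 1\<^sub>m N" by (rule mat_mult_left_right_inverse[OF cC cW CW])
  have "c \<cdot>\<^sub>m (E * Cs) * X = c \<cdot>\<^sub>m (E * Cs * X)"
    by (rule mult_smult_assoc_mat) (use cE cCs cX in auto)
  also have "E * Cs * X = E * Ds" using assoc_mult_mat[OF cE cCs cX] CsX by simp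
  finally have "W * (c \<cdot>\<^sub>m (E * Ds)) = W * (c \<cdot>\<^sub>m (E * Cs) * X)" by simp
  also have "\<dots> = (W * (c \<cdot>\<^sub>m (E * Cs))) * X" using cW cC cX by (simp add: assoc_mult_mat)
  also have "\<dots> = X" using WC cX by simp
  finally show ?thesis unfolding mi[unfolded Cs_def] X_def Mi_def M_def Ds_def[symmetric] by simp
qed

lemma prod_tendsto:
  fixes A B :: "complex mat" and Mf :: "'b \<Rightarrow> complex mat"
  assumes cA: "A \<in> carrier_mat n n" and cB: "B \<in> carrier_mat n n" and c: "\<And>k. Mf k \<in> carrier_mat n n"
    and cG: "G \<in> carrier_mat n n"
    and t: "\<And>i j. i < n \<Longrightarrow> j < n \<Longrightarrow> ((\<lambda>k. Mf k $$ (i,j)) \<longlongrightarrow> G $$ (i,j)) F"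
    and ij: "i < n" "j < n"
  shows "((\<lambda>k. (A * Mf k * B) $$ (i,j)) \<longlongrightarrow> (A * G * B) $$ (i,j)) F"
proof -
  have e: "\<And>X. X \<in> carrier_mat n n \<Longrightarrow> (A * X * B) $$ (i,j) = (\<Sum>l<n. (\<Sum>l'<n. A $$ (i,l') * X $$ (l',l)) * B $$ (l,j))"
  proof -
    fix X :: "complex mat" assume cX: "X \<in> carrier_mat n n"
    have "(A * X * B) $$ (i,j) = (\<Sum>l<n. (A * X) $$ (i,l) * B $$ (l,j))"
      by (rule mult_index_sum[OF _ cB ij]) (use cA cX in auto)
    also have "\<dots> = (\<Sum>l<n. (\<Sum>l'<n. A $$ (i,l') * X $$ (l',l)) * B $$ (l,j))"
      by (rule sum.cong[OF refl]) (subst mult_index_sum[OF cA cX ij(1)], auto)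
    finally show "(A * X * B) $$ (i,j) = (\<Sum>l<n. (\<Sum>l'<n. A $$ (i,l') * X $$ (l',l)) * B $$ (l,j))" .
  qed
  show ?thesis unfolding e[OF c] e[OF cG]
    by (intro tendsto_sum tendsto_mult tendsto_const t) auto
qed


lemma lim_core:
  fixes K Sg Om Pi E Ei G Gi :: "complex mat" and zf wf cf :: "real \<Rightarrow> complex" and F :: "real filter"
  assumes cK: "K \<in> carrier_mat N N" and cS: "Sg \<in> carrier_mat N N" and cO: "Om \<in> carrier_mat N N"
    and cP: "Pi \<in> carrier_mat N N" and cE: "E \<in> carrier_mat N N" and cEi: "Ei \<in> carrier_mat N N"
    and EEi: "E * Ei = 1\<^sub>m N"
    and h1: "Pi * K = 0\<^sub>m N N" "Pi * Sg = 0\<^sub>m N N" "Pi * Pi = Pi"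
    and h2: "Om * adj K = 0\<^sub>m N N" "Sg * adj K = Sg" "Sg * Pi = 0\<^sub>m N N" "Om * Pi = Pi"
    and G: "K * adj K + Pi = G" and cGi: "Gi \<in> carrier_mat N N" and GGi: "G * Gi = 1\<^sub>m N"
    and ev: "\<forall>\<^sub>F k in F. zf k * wf k = 1 \<and> cf k \<noteq> 0"
    and wt: "(wf \<longlongrightarrow> 0) F"
    and ij: "i < N" "j < N"
  shows "((\<lambda>k. (minv (cf k \<cdot>\<^sub>m (E * (zf k \<cdot>\<^sub>m K - Sg - Om))) * (cf k \<cdot>\<^sub>m (E * (zf k \<cdot>\<^sub>m K + Sg + Om)))) $$ (i,j))
     \<longlongrightarrow> (- 1\<^sub>m N + 2 \<cdot>\<^sub>m (adj K * Gi * K)) $$ (i,j)) F"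
  and "((\<lambda>k. (- (minv (cf k \<cdot>\<^sub>m (E * (zf k \<cdot>\<^sub>m K - Sg - Om))) * (cf k \<cdot>\<^sub>m (E * (zf k \<cdot>\<^sub>m K + Sg + Om))))) $$ (i,j))
     \<longlongrightarrow> (- (- 1\<^sub>m N + 2 \<cdot>\<^sub>m (adj K * Gi * K))) $$ (i,j)) F"
proof -
  define Mf where "Mf k = K * adj K + Pi - wf k \<cdot>\<^sub>m Sg" for k
  have cG: "G \<in> carrier_mat N N" using G cK cP by auto
  have cM: "\<And>k. Mf k \<in> carrier_mat N N" unfolding Mf_def using cK cP cS by (auto intro!: minus_carrier_mat)
  have tM: "((\<lambda>k. Mf k $$ (i',j')) \<longlongrightarrow> G $$ (i',j')) F" if "i' < N" "j' < N" for i' j'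
  proof -
    have e: "\<And>k. Mf k $$ (i',j') = G $$ (i',j') - wf k * Sg $$ (i',j')"
      unfolding Mf_def G[symmetric] using that cK cP cS by simp
    have "((\<lambda>k. G $$ (i',j') - wf k * Sg $$ (i',j')) \<longlongrightarrow> G $$ (i',j') - 0 * Sg $$ (i',j')) F"
      by (intro tendsto_intros wt)
    thus ?thesis unfolding e by simp
  qed
  have evd: "\<forall>\<^sub>F k in F. det (Mf k) \<noteq> 0"
    by (rule inv_tendsto(1)[of Mf N G F Gi]) (use cM cG tM cGi GGi in auto)
  have it2: "((\<lambda>k. ((1 / det (Mf k)) \<cdot>\<^sub>m adj_mat (Mf k)) $$ (i',j')) \<longlongrightarrow> Gi $$ (i',j')) F"
    if "i' < N" "j' < N" for i' j'
    by (rule inv_tendsto(2)[of Mf N G F Gi]) (use cM cG tM cGi GGi that in auto)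
  define Mi where "Mi k = (1 / det (Mf k)) \<cdot>\<^sub>m adj_mat (Mf k)" for k
  have cMi: "\<And>k. Mi k \<in> carrier_mat N N" unfolding Mi_def using adj_mat(1)[OF cM] by auto
  have tP: "((\<lambda>k. (adj K * Mi k * K) $$ (i,j)) \<longlongrightarrow> (adj K * Gi * K) $$ (i,j)) F"
    by (rule prod_tendsto[OF _ cK cMi cGi _ ij]) (use cK it2 in \<open>auto simp: Mi_def\<close>)
  have cX: "\<And>k. adj K * Mi k * K \<in> carrier_mat N N" using cK cMi by auto
  have cX': "adj K * Gi * K \<in> carrier_mat N N" using cK cGi by auto
  have t2: "((\<lambda>k. (- 1\<^sub>m N + 2 \<cdot>\<^sub>m (adj K * Mi k * K)) $$ (i,j)) \<longlongrightarrow> (- 1\<^sub>m N + 2 \<cdot>\<^sub>m (adj K * Gi * K)) $$ (i,j)) F"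
  proof -
    have e: "\<And>Y. Y \<in> carrier_mat N N \<Longrightarrow> (- 1\<^sub>m N + 2 \<cdot>\<^sub>m Y) $$ (i,j) = - (1\<^sub>m N $$ (i,j)) + 2 * Y $$ (i,j)"
      using ij by simp
    show ?thesis unfolding e[OF cX] e[OF cX'] by (intro tendsto_intros tP)
  qed
  have evq: "\<forall>\<^sub>F k in F. (minv (cf k \<cdot>\<^sub>m (E * (zf k \<cdot>\<^sub>m K - Sg - Om))) * (cf k \<cdot>\<^sub>m (E * (zf k \<cdot>\<^sub>m K + Sg + Om)))) $$ (i,j)
      = (- 1\<^sub>m N + 2 \<cdot>\<^sub>m (adj K * Mi k * K)) $$ (i,j)"
    using ev evd
  proof eventually_elim
    case (elim k)
    show ?case
      using core_eq[OF cK cS cO cP cE cEi EEi _ _ h1 h2, of "zf k" "wf k" "cf k"] elim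
      unfolding Mi_def Mf_def by simp
  qed
  from tendsto_cong[OF evq] t2 show "((\<lambda>k. (minv (cf k \<cdot>\<^sub>m (E * (zf k \<cdot>\<^sub>m K - Sg - Om))) * (cf k \<cdot>\<^sub>m (E * (zf k \<cdot>\<^sub>m K + Sg + Om)))) $$ (i,j))
     \<longlongrightarrow> (- 1\<^sub>m N + 2 \<cdot>\<^sub>m (adj K * Gi * K)) $$ (i,j)) F" by simp
  have evq2: "\<forall>\<^sub>F k in F. (- (minv (cf k \<cdot>\<^sub>m (E * (zf k \<cdot>\<^sub>m K - Sg - Om))) * (cf k \<cdot>\<^sub>m (E * (zf k \<cdot>\<^sub>m K + Sg + Om))))) $$ (i,j)
      = - ((- 1\<^sub>m N + 2 \<cdot>\<^sub>m (adj K * Mi k * K)) $$ (i,j))"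
    using ev evd
  proof eventually_elim
    case (elim k)
    have "minv (cf k \<cdot>\<^sub>m (E * (zf k \<cdot>\<^sub>m K - Sg - Om))) * (cf k \<cdot>\<^sub>m (E * (zf k \<cdot>\<^sub>m K + Sg + Om)))
      = - 1\<^sub>m N + 2 \<cdot>\<^sub>m (adj K * Mi k * K)"
      using core_eq[OF cK cS cO cP cE cEi EEi _ _ h1 h2, of "zf k" "wf k" "cf k"] elim
      unfolding Mi_def Mf_def by simp
    then show ?case using ij carrier_matD[OF cX[of k]] by simp
  qed
  have t3: "((\<lambda>k. - ((- 1\<^sub>m N + 2 \<cdot>\<^sub>m (adj K * Mi k * K)) $$ (i,j))) \<longlongrightarrow> (- (- 1\<^sub>m N + 2 \<cdot>\<^sub>m (adj K * Gi * K))) $$ (i,j)) F"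
    using tendsto_minus[OF t2] ij carrier_matD[OF cX'] by simp
  from tendsto_cong[OF evq2] t3 show "((\<lambda>k. (- (minv (cf k \<cdot>\<^sub>m (E * (zf k \<cdot>\<^sub>m K - Sg - Om))) * (cf k \<cdot>\<^sub>m (E * (zf k \<cdot>\<^sub>m K + Sg + Om))))) $$ (i,j))
     \<longlongrightarrow> (- (- 1\<^sub>m N + 2 \<cdot>\<^sub>m (adj K * Gi * K))) $$ (i,j)) F" by simp
qed


definition LF :: "nat \<Rightarrow> complex \<Rightarrow> complex \<Rightarrow> complex mat" where
  "LF n c d = c \<cdot>\<^sub>m 1\<^sub>m n + d \<cdot>\<^sub>m ones_mat n n"
definition SF :: "nat \<Rightarrow> nat \<Rightarrow> complex \<Rightarrow> complex mat" where
  "SF u v e = e \<cdot>\<^sub>m ones_mat u v"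

lemma LF_carrier[simp]: "LF n c d \<in> carrier_mat n n" by (simp add: LF_def)
lemma SF_carrier[simp]: "SF u v e \<in> carrier_mat u v" by (simp add: SF_def)
lemma LF_dim[simp]: "dim_row (LF n c d) = n" "dim_col (LF n c d) = n" by (auto simp add: LF_def)
lemma SF_dim[simp]: "dim_row (SF u v e) = u" "dim_col (SF u v e) = v" by (auto simp add: SF_def)
lemma LF_index: "i < n \<Longrightarrow> j < n \<Longrightarrow> LF n c d $$ (i,j) = (if i = j then c else 0) + d"
  by (simp add: LF_def ones_mat_def)
lemma SF_index: "i < u \<Longrightarrow> j < v \<Longrightarrow> SF u v e $$ (i,j) = e"
  by (simp add: SF_def ones_mat_def)

lemma one_LF: "1\<^sub>m n = LF n 1 0" by (intro eq_matI) (auto simp: LF_index)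
lemma zero_SF: "0\<^sub>m u v = SF u v 0" by (intro eq_matI) (auto simp: SF_index)

lemma sum_aux: fixes A B :: "nat \<Rightarrow> complex"
  shows "(\<Sum>l<n. (A l + d) * (B l + d')) = (\<Sum>l<n. A l * B l) + d' * (\<Sum>l<n. A l) + d * (\<Sum>l<n. B l) + of_nat n * d * d'"
  by (simp add: sum.distrib algebra_simps sum_distrib_left sum_distrib_right)

lemma delta_sum1: "i < (n::nat) \<Longrightarrow> (\<Sum>l<n. (if i = l then c else 0) * (g l :: complex)) = c * g i"
  by (simp add: sum.delta sum.delta' if_distrib[of "\<lambda>x. x * _"] cong: if_cong)
lemma delta_sum2: "i < (n::nat) \<Longrightarrow> (\<Sum>l<n. (if i = l then c else (0::complex))) = c"
  by (simp add: sum.delta sum.delta' if_distrib[of "\<lambda>x. x * _"] cong: if_cong)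
lemma delta_sum3: "j < (n::nat) \<Longrightarrow> (\<Sum>l<n. (if l = j then c else (0::complex))) = c"
  by (simp add: sum.delta sum.delta')

lemma LF_LF: "LF n c d * LF n c' d' = LF n (c * c') (c * d' + d * c' + of_nat n * d * d')"
proof (intro eq_matI)
  fix i j assume "i < dim_row (LF n (c * c') (c * d' + d * c' + of_nat n * d * d'))"
    "j < dim_col (LF n (c * c') (c * d' + d * c' + of_nat n * d * d'))"
  hence ij: "i < n" "j < n" by auto
  have "(LF n c d * LF n c' d') $$ (i,j) = (\<Sum>l<n. LF n c d $$ (i,l) * LF n c' d' $$ (l,j))"
    by (rule mult_index_sum) (use ij in auto)
  also have "\<dots> = (\<Sum>l<n. ((if i = l then c else 0) + d) * ((if l = j then c' else 0) + d'))"
    by (rule sum.cong) (use ij in \<open>auto simp: LF_index\<close>)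
  also have "\<dots> = c * (if i = j then c' else 0) + d' * c + d * c' + of_nat n * d * d'"
    unfolding sum_aux delta_sum1[OF ij(1)] delta_sum2[OF ij(1)] delta_sum3[OF ij(2)] ..
  also have "\<dots> = LF n (c * c') (c * d' + d * c' + of_nat n * d * d') $$ (i,j)"
    using ij by (simp add: LF_index algebra_simps)
  finally show "(LF n c d * LF n c' d') $$ (i,j) = LF n (c * c') (c * d' + d * c' + of_nat n * d * d') $$ (i,j)" .
qed auto

lemma LF_SF: "LF u c d * SF u v e = SF u v ((c + of_nat u * d) * e)"
proof (intro eq_matI)
  fix i j assume "i < dim_row (SF u v ((c + of_nat u * d) * e))" "j < dim_col (SF u v ((c + of_nat u * d) * e))"
  hence ij: "i < u" "j < v" by auto
  have "(LF u c d * SF u v e) $$ (i,j) = (\<Sum>l<u. LF u c d $$ (i,l) * SF u v e $$ (l,j))"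
    by (rule mult_index_sum) (use ij in auto)
  also have "\<dots> = (\<Sum>l<u. ((if i = l then c else 0) + d) * (0 + e))"
    by (rule sum.cong) (use ij in \<open>auto simp: LF_index SF_index\<close>)
  also have "\<dots> = c * 0 + e * c + d * 0 + of_nat u * d * e"
    unfolding sum_aux delta_sum1[OF ij(1)] delta_sum2[OF ij(1)] by simp
  also have "\<dots> = SF u v ((c + of_nat u * d) * e) $$ (i,j)"
    using ij by (simp add: SF_index algebra_simps)
  finally show "(LF u c d * SF u v e) $$ (i,j) = SF u v ((c + of_nat u * d) * e) $$ (i,j)" .
qed auto

lemma SF_LF: "SF u v e * LF v c d = SF u v (e * (c + of_nat v * d))"
proof (intro eq_matI)
  fix i j assume "i < dim_row (SF u v (e * (c + of_nat v * d)))" "j < dim_col (SF u v (e * (c + of_nat v * d)))"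
  hence ij: "i < u" "j < v" by auto
  have "(SF u v e * LF v c d) $$ (i,j) = (\<Sum>l<v. SF u v e $$ (i,l) * LF v c d $$ (l,j))"
    by (rule mult_index_sum) (use ij in auto)
  also have "\<dots> = (\<Sum>l<v. (0 + e) * ((if l = j then c else 0) + d))"
    by (rule sum.cong) (use ij in \<open>auto simp: LF_index SF_index\<close>)
  also have "\<dots> = 0 + d * 0 + e * c + of_nat v * e * d"
    unfolding sum_aux delta_sum3[OF ij(2)] by simp
  also have "\<dots> = SF u v (e * (c + of_nat v * d)) $$ (i,j)"
    using ij by (simp add: SF_index algebra_simps)
  finally show "(SF u v e * LF v c d) $$ (i,j) = SF u v (e * (c + of_nat v * d)) $$ (i,j)" .
qed auto

lemma SF_SF: "SF u v e * SF v w f = SF u w (of_nat v * e * f)"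
proof (intro eq_matI)
  fix i j assume "i < dim_row (SF u w (of_nat v * e * f))" "j < dim_col (SF u w (of_nat v * e * f))"
  hence ij: "i < u" "j < w" by auto
  have "(SF u v e * SF v w f) $$ (i,j) = (\<Sum>l<v. SF u v e $$ (i,l) * SF v w f $$ (l,j))"
    by (rule mult_index_sum) (use ij in auto)
  also have "\<dots> = (\<Sum>l<v. e * f)"
    by (rule sum.cong) (use ij in \<open>auto simp: SF_index\<close>)
  finally show "(SF u v e * SF v w f) $$ (i,j) = SF u w (of_nat v * e * f) $$ (i,j)" using ij by (simp add: SF_index)
qed auto

lemma LF_add: "LF n c d + LF n c' d' = LF n (c + c') (d + d')"
  by (intro eq_matI) (auto simp: LF_index)
lemma SF_add: "SF u v e + SF u v f = SF u v (e + f)"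
  by (intro eq_matI) (auto simp: SF_index)
lemma LF_SF_add: "LF n c d + SF n n e = LF n c (d + e)"
  by (intro eq_matI) (auto simp: LF_index SF_index)
lemma SF_LF_add: "SF n n e + LF n c d = LF n c (d + e)"
  by (intro eq_matI) (auto simp: LF_index SF_index)
lemma adj_LF: "adj (LF n c d) = LF n (cnj c) (cnj d)"
  by (intro eq_matI) (auto simp: LF_index)
lemma adj_SF: "adj (SF u v e) = SF v u (cnj e)"
  by (intro eq_matI) (auto simp: SF_index)
lemma uminus_SF: "- SF u v e = SF u v (- e)"
  by (intro eq_matI) (auto simp: SF_index)
lemma uminus_LF: "- LF n c d = LF n (- c) (- d)"
  by (intro eq_matI) (auto simp: LF_index)
lemma LF_eq: "c = c' \<Longrightarrow> d = d' \<Longrightarrow> LF n c d = LF n c' d'" by simp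

lemmas LFSF = LF_LF LF_SF SF_LF SF_SF LF_add SF_add LF_SF_add SF_LF_add adj_LF adj_SF uminus_SF uminus_LF


lemma my_r_inv[simp]: "A + - A = (0\<^sub>m (dim_row A) (dim_col A) :: complex mat)"
  by (intro eq_matI) auto
lemma my_add_minus[simp]: "dim_row A = dim_row B \<Longrightarrow> dim_col A = dim_col B \<Longrightarrow> A + (B - A) = (B :: complex mat)"
  by (intro eq_matI) auto
lemma my_uminus_minus: "dim_row A = dim_row B \<Longrightarrow> dim_col A = dim_col B \<Longrightarrow> - (A - B) = (B - A :: complex mat)"
  by (intro eq_matI) auto
lemma my_add_zero[simp]: "dim_row A = r \<Longrightarrow> dim_col A = c \<Longrightarrow> A + 0\<^sub>m r c = (A :: complex mat)"
  "dim_row A = r \<Longrightarrow> dim_col A = c \<Longrightarrow> 0\<^sub>m r c + A = (A :: complex mat)"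
  by (intro eq_matI; auto)+
lemma my_l_inv[simp]: "- A + A = (0\<^sub>m (dim_row A) (dim_col A) :: complex mat)"
  by (intro eq_matI) auto
lemma my_assoc[simp]: "dim_col A = dim_row B \<Longrightarrow> dim_col B = dim_row C \<Longrightarrow> A * B * C = A * (B * (C :: complex mat))"
  by (rule assoc_mult_mat[of _ "dim_row A" "dim_col A" _ "dim_col B" _ "dim_col C"]) auto
lemma adj_minus'[simp]: "dim_row A = dim_row B \<Longrightarrow> dim_col A = dim_col B \<Longrightarrow> adj (A - B) = adj A - adj B"
  by (intro eq_matI) auto
lemma adj_mult'[simp]: "dim_col A = dim_row B \<Longrightarrow> adj (A * B) = adj B * adj A"
  by (rule adj_mult[of _ "dim_row A" "dim_col A" _ "dim_col B"]) auto
lemma my_uminus_zero[simp]: "- 0\<^sub>m r c = (0\<^sub>m r c :: complex mat)"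
  by (intro eq_matI) auto

definition "Einf m a b R = B3 m a b (M3 (1\<^sub>m m) (0\<^sub>m m a) (0\<^sub>m m b) R (1\<^sub>m a) (0\<^sub>m a b) (0\<^sub>m b m) (0\<^sub>m b a) (1\<^sub>m b))"
definition "Eiinf m a b R = B3 m a b (M3 (1\<^sub>m m) (0\<^sub>m m a) (0\<^sub>m m b) (- R) (1\<^sub>m a) (0\<^sub>m a b) (0\<^sub>m b m) (0\<^sub>m b a) (1\<^sub>m b))"
definition "Kinf m a b P Q R = B3 m a b (M3 (1\<^sub>m m) (0\<^sub>m m a) P (0\<^sub>m a m) (1\<^sub>m a) (Q - R * P) (0\<^sub>m b m) (0\<^sub>m b a) (0\<^sub>m b b))"
definition "Sginf m a b R S = B3 m a b (M3 S (- (S * adj R)) (0\<^sub>m m b) (- (R * S)) (R * S * adj R) (0\<^sub>m a b) (0\<^sub>m b m) (0\<^sub>m b a) (0\<^sub>m b b))"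
definition "Ominf m a b P Q R = B3 m a b (M3 (0\<^sub>m m m) (0\<^sub>m m a) (0\<^sub>m m b) (0\<^sub>m a m) (0\<^sub>m a a) (0\<^sub>m a b) (- adj P) (- adj (Q - R * P)) (1\<^sub>m b))"
definition "Piinf m a b = B3 m a b (M3 (0\<^sub>m m m) (0\<^sub>m m a) (0\<^sub>m m b) (0\<^sub>m a m) (0\<^sub>m a a) (0\<^sub>m a b) (0\<^sub>m b m) (0\<^sub>m b a) (1\<^sub>m b))"

context
  fixes m a b :: nat and P Q R S :: "complex mat"
  assumes cP: "P \<in> carrier_mat m b" and cQ: "Q \<in> carrier_mat a b" and cR: "R \<in> carrier_mat a m"
    and cS: "S \<in> carrier_mat m m"
begin

lemmas cc = cP cQ cR cS carrier_matD[OF cP] carrier_matD[OF cQ] carrier_matD[OF cR] carrier_matD[OF cS]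
  minus_carrier_mat

lemma inf_E: "Einf m a b R * Eiinf m a b R = 1\<^sub>m (m+a+b)"
  unfolding Einf_def Eiinf_def B3_M3_one
  by (subst B3_M3_mult) (auto simp: cc)

lemma inf_B: "Einf m a b R * Kinf m a b P Q R = B_PQRS m a b P Q R"
  unfolding Einf_def Kinf_def B_PQRS_def block3_M3
  by (subst B3_M3_mult) (auto simp: cc)

lemma inf_A: "Einf m a b R * (Sginf m a b R S + Ominf m a b P Q R) = A_PQRS m a b P Q R S"
  unfolding Einf_def Sginf_def Ominf_def A_PQRS_def block3_M3
  apply (subst B3_M3_add) apply (auto simp: cc)[9]
  apply (subst B3_M3_mult) apply (auto simp: cc)[18]
  apply (auto simp: cc my_uminus_minus)
  done

lemma inf_h1: "Piinf m a b * Kinf m a b P Q R = 0\<^sub>m (m+a+b) (m+a+b)"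
    "Piinf m a b * Sginf m a b R S = 0\<^sub>m (m+a+b) (m+a+b)"
    "Piinf m a b * Piinf m a b = Piinf m a b"
  unfolding Piinf_def Kinf_def Sginf_def B3_M3_zero
  by (subst B3_M3_mult; auto simp: cc)+

lemma inf_adjK: "adj (Kinf m a b P Q R) = B3 m a b (M3 (1\<^sub>m m) (0\<^sub>m m a) (0\<^sub>m m b) (0\<^sub>m a m) (1\<^sub>m a) (0\<^sub>m a b) (adj P) (adj (Q - R * P)) (0\<^sub>m b b))"
  unfolding Kinf_def by (subst B3_M3_adj) (auto simp: cc simp del: adj_minus')

lemma inf_h2: "Ominf m a b P Q R * adj (Kinf m a b P Q R) = 0\<^sub>m (m+a+b) (m+a+b)"
    "Sginf m a b R S * adj (Kinf m a b P Q R) = Sginf m a b R S"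
    "Sginf m a b R S * Piinf m a b = 0\<^sub>m (m+a+b) (m+a+b)"
    "Ominf m a b P Q R * Piinf m a b = Piinf m a b"
  unfolding Piinf_def inf_adjK Sginf_def Ominf_def B3_M3_zero
  by (subst B3_M3_mult; auto simp: cc simp del: adj_minus')+

end

lemma SF_minus: "SF u v e - SF u v f = SF u v (e - f)"
  by (intro eq_matI) (auto simp: SF_index)
lemma SF_eq: "e = f \<Longrightarrow> SF u v e = SF u v f" by simp
lemma B3_M3_cong: "x00 = y00 \<Longrightarrow> x01 = y01 \<Longrightarrow> x02 = y02 \<Longrightarrow> x10 = y10 \<Longrightarrow> x11 = y11 \<Longrightarrow> x12 = y12 \<Longrightarrow>
  x20 = y20 \<Longrightarrow> x21 = y21 \<Longrightarrow> x22 = y22 \<Longrightarrow>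
  B3 m a b (M3 x00 x01 x02 x10 x11 x12 x20 x21 x22) = B3 m a b (M3 y00 y01 y02 y10 y11 y12 y20 y21 y22)" by simp

lemma B3_M3_idx:
  assumes "x00 \<in> carrier_mat m m" "x01 \<in> carrier_mat m a" "x02 \<in> carrier_mat m b"
  "x10 \<in> carrier_mat a m" "x11 \<in> carrier_mat a a" "x12 \<in> carrier_mat a b"
  "x20 \<in> carrier_mat b m" "x21 \<in> carrier_mat b a" "x22 \<in> carrier_mat b b"
  shows "i < m \<Longrightarrow> m \<le> j \<Longrightarrow> j < m + a \<Longrightarrow> B3 m a b (M3 x00 x01 x02 x10 x11 x12 x20 x21 x22) $$ (i,j) = x01 $$ (i, j - m)"
    "m \<le> i \<Longrightarrow> i < m + a \<Longrightarrow> m + a \<le> j \<Longrightarrow> j < m + a + b \<Longrightarrow> B3 m a b (M3 x00 x01 x02 x10 x11 x12 x20 x21 x22) $$ (i,j) = x12 $$ (i - m, j - (m + a))"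
    "m + a \<le> i \<Longrightarrow> i < m + a + b \<Longrightarrow> j < m \<Longrightarrow> B3 m a b (M3 x00 x01 x02 x10 x11 x12 x20 x21 x22) $$ (i,j) = x20 $$ (i - (m + a), j)"
    "m \<le> i \<Longrightarrow> i < m + a \<Longrightarrow> j < m \<Longrightarrow> B3 m a b (M3 x00 x01 x02 x10 x11 x12 x20 x21 x22) $$ (i,j) = x10 $$ (i - m, j)"
    "i < m \<Longrightarrow> m + a \<le> j \<Longrightarrow> j < m + a + b \<Longrightarrow> B3 m a b (M3 x00 x01 x02 x10 x11 x12 x20 x21 x22) $$ (i,j) = x02 $$ (i, j - (m + a))"
    "m + a \<le> i \<Longrightarrow> i < m + a + b \<Longrightarrow> m \<le> j \<Longrightarrow> j < m + a \<Longrightarrow> B3 m a b (M3 x00 x01 x02 x10 x11 x12 x20 x21 x22) $$ (i,j) = x21 $$ (i - (m + a), j - m)"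
  by (auto simp: B3_index M3_def blk_def blk_off_def)

context
  fixes m a b :: nat and p q r :: complex
  assumes rp: "cnj p = p" and rq: "cnj q = q" and rr: "cnj r = r"
    and D: "1 + of_nat b * of_nat m * p * p + of_nat b * of_nat a * (q - of_nat m * r * p) * (q - of_nat m * r * p) \<noteq> 0"
begin

definition "sv = q - of_nat m * r * p"
definition "Dv = 1 + of_nat b * of_nat m * p * p + of_nat b * of_nat a * sv * sv"
definition "bet = of_nat b / Dv"

lemma rs: "cnj sv = sv" unfolding sv_def using rp rq rr by simp
lemma Dnz: "Dv \<noteq> 0" using D unfolding Dv_def sv_def .

definition "Ginf = B3 m a b (M3 (LF m 1 (- bet * p * p)) (SF m a (- bet * p * sv)) (SF m b 0)
   (SF a m (- bet * p * sv)) (LF a 1 (- bet * sv * sv)) (SF a b 0) (SF b m 0) (SF b a 0) (LF b 1 0))"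

lemma T2_inf: "SF a b q - SF a m r * SF m b p = SF a b sv"
  unfolding SF_SF SF_minus sv_def by (simp add: algebra_simps)

lemma G_inf: "Kinf m a b (SF m b p) (SF a b q) (SF a m r) * adj (Kinf m a b (SF m b p) (SF a b q) (SF a m r)) + Piinf m a b
  = B3 m a b (M3 (LF m 1 (of_nat b * p * p)) (SF m a (of_nat b * p * sv)) (SF m b 0)
   (SF a m (of_nat b * p * sv)) (LF a 1 (of_nat b * sv * sv)) (SF a b 0) (SF b m 0) (SF b a 0) (LF b 1 0))"
  unfolding Kinf_def Piinf_def T2_inf one_LF zero_SF
  apply (subst B3_M3_adj, simp_all)
  apply (subst B3_M3_mult, simp_all)
  apply (subst B3_M3_add, simp_all)
  apply (intro B3_M3_cong)
  apply (simp_all add: LFSF rp rs algebra_simps)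
  done

lemma Dnz': "1 + of_nat b * of_nat m * p * p + of_nat b * of_nat a * sv * sv \<noteq> 0"
  using Dnz unfolding Dv_def .
lemma bet': "bet = of_nat b / (1 + of_nat b * of_nat m * p * p + of_nat b * of_nat a * sv * sv)"
  unfolding bet_def Dv_def ..

lemma betD: "bet * (1 + of_nat b * of_nat m * p * p + of_nat b * of_nat a * sv * sv) = of_nat b"
  using Dnz unfolding bet_def Dv_def by simp

definition "Gform = B3 m a b (M3 (LF m 1 (of_nat b * p * p)) (SF m a (of_nat b * p * sv)) (SF m b 0)
   (SF a m (of_nat b * p * sv)) (LF a 1 (of_nat b * sv * sv)) (SF a b 0) (SF b m 0) (SF b a 0) (LF b 1 0))"

lemma GGi_inf: "Gform * Ginf = 1\<^sub>m (m+a+b)"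
  unfolding Gform_def Ginf_def B3_M3_one
  unfolding one_LF zero_SF
  apply (subst B3_M3_mult, simp_all)
  apply (intro B3_M3_cong)
  apply (simp_all add: LFSF)
  apply (intro LF_eq SF_eq; (simp; fail)?; use Dnz' in \<open>simp add: bet' divide_simps\<close>; simp add: algebra_simps)+
  done

definition "Kinf' = Kinf m a b (SF m b p) (SF a b q) (SF a m r)"

lemma KGK_inf_blocks: "adj Kinf' * Ginf * Kinf' = B3 m a b (M3 (LF m 1 (- bet * p * p)) (SF m a (- bet * p * sv)) (SF m b (p / Dv))
  (SF a m (- bet * p * sv)) (LF a 1 (- bet * sv * sv)) (SF a b (sv / Dv))
  (SF b m (p / Dv)) (SF b a (sv / Dv)) (SF b b ((of_nat m * p * p + of_nat a * sv * sv) / Dv)))"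
  unfolding Kinf'_def Kinf_def Ginf_def T2_inf one_LF zero_SF
  apply (subst B3_M3_adj, simp_all add: LFSF rp rs)
  apply (subst B3_M3_mult, simp_all add: LFSF rp rs)
  apply (subst B3_M3_mult, simp_all add: LFSF rp rs)
  apply (intro B3_M3_cong)
  apply (intro LF_eq SF_eq; (simp; fail)?; use Dnz' in \<open>simp add: bet' Dv_def divide_simps\<close>; simp add: algebra_simps)+
  done

end

lemma my_uminus_mult[simp]: "dim_col A = dim_row B \<Longrightarrow> - A * B = - (A * (B :: complex mat))"
  "dim_col A = dim_row B \<Longrightarrow> A * - B = - (A * (B :: complex mat))"
  by (intro eq_matI; auto simp: scalar_prod_def sum_negf)+

lemma my_add_uminus[simp]: "dim_row A = dim_row B \<Longrightarrow> dim_col A = dim_col B \<Longrightarrow> A + - B = A - (B :: complex mat)"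
  by (intro eq_matI) auto

definition "E0 m a b P S = B3 m a b (M3 S (0\<^sub>m m a) (0\<^sub>m m b) (0\<^sub>m a m) (1\<^sub>m a) (0\<^sub>m a b) (- adj P) (0\<^sub>m b a) (1\<^sub>m b))"
definition "Ei0 m a b P Si = B3 m a b (M3 Si (0\<^sub>m m a) (0\<^sub>m m b) (0\<^sub>m a m) (1\<^sub>m a) (0\<^sub>m a b) (adj P * Si) (0\<^sub>m b a) (1\<^sub>m b))"
definition "K0 m a b Q R = B3 m a b (M3 (1\<^sub>m m) (- adj R) (0\<^sub>m m b) (0\<^sub>m a m) (0\<^sub>m a a) (0\<^sub>m a b) (0\<^sub>m b m) (- adj Q) (1\<^sub>m b))"
definition "Sg0 m a b P Si = B3 m a b (M3 Si (0\<^sub>m m a) (Si * P) (0\<^sub>m a m) (0\<^sub>m a a) (0\<^sub>m a b) (adj P * Si) (0\<^sub>m b a) (adj P * Si * P))"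
definition "Om0 m a b Q R = B3 m a b (M3 (0\<^sub>m m m) (0\<^sub>m m a) (0\<^sub>m m b) R (1\<^sub>m a) Q (0\<^sub>m b m) (0\<^sub>m b a) (0\<^sub>m b b))"
definition "Pi0 m a b = B3 m a b (M3 (0\<^sub>m m m) (0\<^sub>m m a) (0\<^sub>m m b) (0\<^sub>m a m) (1\<^sub>m a) (0\<^sub>m a b) (0\<^sub>m b m) (0\<^sub>m b a) (0\<^sub>m b b))"

context
  fixes m a b :: nat and P Q R S Si :: "complex mat"
  assumes cP: "P \<in> carrier_mat m b" and cQ: "Q \<in> carrier_mat a b" and cR: "R \<in> carrier_mat a m"
    and cS: "S \<in> carrier_mat m m" and cSi: "Si \<in> carrier_mat m m" and SSi: "S * Si = 1\<^sub>m m"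
begin

lemma SSi': "dim_row X = m \<Longrightarrow> S * (Si * X) = X"
proof -
  assume "dim_row X = m"
  hence "S * (Si * X) = (S * Si) * X" using cS cSi by (intro assoc_mult_mat[symmetric, of _ m m _ m _ "dim_col X"]) auto
  thus ?thesis using SSi \<open>dim_row X = m\<close> by simp
qed

lemmas cc0 = cP cQ cR cS cSi carrier_matD[OF cP] carrier_matD[OF cQ] carrier_matD[OF cR] carrier_matD[OF cS]
  carrier_matD[OF cSi] minus_carrier_mat SSi SSi'

lemma z_E: "E0 m a b P S * Ei0 m a b P Si = 1\<^sub>m (m+a+b)"
  unfolding E0_def Ei0_def B3_M3_one
  by (subst B3_M3_mult) (auto simp: cc0)

lemma z_A: "E0 m a b P S * K0 m a b Q R = A_PQRS m a b P Q R S"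
  unfolding E0_def K0_def A_PQRS_def block3_M3
  by (subst B3_M3_mult) (auto simp: cc0)

lemma z_B: "E0 m a b P S * (Sg0 m a b P Si + Om0 m a b Q R) = B_PQRS m a b P Q R"
  unfolding E0_def Sg0_def Om0_def B_PQRS_def block3_M3
  apply (subst B3_M3_add) apply (auto simp: cc0)[9]
  apply (subst B3_M3_mult) apply (auto simp: cc0)[18]
  apply (auto simp: cc0)
  done

lemma z_adjK: "adj (K0 m a b Q R) = B3 m a b (M3 (1\<^sub>m m) (0\<^sub>m m a) (0\<^sub>m m b) (- R) (0\<^sub>m a a) (- Q) (0\<^sub>m b m) (0\<^sub>m b a) (1\<^sub>m b))"
  unfolding K0_def by (subst B3_M3_adj) (auto simp: cc0 adj_uminus)

lemma z_h1: "Pi0 m a b * K0 m a b Q R = 0\<^sub>m (m+a+b) (m+a+b)"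
    "Pi0 m a b * Sg0 m a b P Si = 0\<^sub>m (m+a+b) (m+a+b)"
    "Pi0 m a b * Pi0 m a b = Pi0 m a b"
  unfolding Pi0_def K0_def Sg0_def B3_M3_zero
  by (subst B3_M3_mult; auto simp: cc0)+

lemma z_h2: "Om0 m a b Q R * adj (K0 m a b Q R) = 0\<^sub>m (m+a+b) (m+a+b)"
    "Sg0 m a b P Si * adj (K0 m a b Q R) = Sg0 m a b P Si"
    "Sg0 m a b P Si * Pi0 m a b = 0\<^sub>m (m+a+b) (m+a+b)"
    "Om0 m a b Q R * Pi0 m a b = Pi0 m a b"
  unfolding Pi0_def z_adjK Sg0_def Om0_def B3_M3_zero
  by (subst B3_M3_mult; auto simp: cc0)+

end

context
  fixes m a b :: nat and p q r :: complex
  assumes rp: "cnj p = p" and rq: "cnj q = q" and rr: "cnj r = r"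
    and D: "1 + of_nat a * of_nat m * r * r + of_nat a * of_nat b * q * q \<noteq> 0"
begin

definition "D0v = 1 + of_nat a * of_nat m * r * r + of_nat a * of_nat b * q * q"
definition "bt = of_nat a / D0v"
lemma D0nz: "D0v \<noteq> 0" using D unfolding D0v_def .

definition "K0' = K0 m a b (SF a b q) (SF a m r)"

definition "G0form = B3 m a b (M3 (LF m 1 (of_nat a * r * r)) (SF m a 0) (SF m b (of_nat a * r * q))
  (SF a m 0) (LF a 1 0) (SF a b 0) (SF b m (of_nat a * r * q)) (SF b a 0) (LF b 1 (of_nat a * q * q)))"

definition "Gi0 = B3 m a b (M3 (LF m 1 (- bt * r * r)) (SF m a 0) (SF m b (- bt * r * q))
  (SF a m 0) (LF a 1 0) (SF a b 0) (SF b m (- bt * r * q)) (SF b a 0) (LF b 1 (- bt * q * q)))"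

lemma G0: "K0' * adj K0' + Pi0 m a b = G0form"
  unfolding K0'_def K0_def Pi0_def G0form_def one_LF zero_SF
  apply (subst B3_M3_adj, simp_all add: LFSF rp rq rr)
  apply (subst B3_M3_mult, simp_all add: LFSF rp rq rr)
  apply (subst B3_M3_add, simp_all add: LFSF rp rq rr)
  apply (intro B3_M3_cong)
  apply (simp_all add: algebra_simps)
  done

lemma GGi0: "G0form * Gi0 = 1\<^sub>m (m+a+b)"
  unfolding G0form_def Gi0_def B3_M3_one
  unfolding one_LF zero_SF
  apply (subst B3_M3_mult, simp_all)
  apply (intro B3_M3_cong)
  apply (simp_all add: LFSF)
  apply (intro LF_eq SF_eq; (simp; fail)?; use D in \<open>simp add: bt_def D0v_def divide_simps\<close>; simp add: algebra_simps)+
  done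

lemma KGK0_blocks: "adj K0' * Gi0 * K0' = B3 m a b (M3 (LF m 1 (- bt * r * r)) (SF m a (- r / D0v)) (SF m b (- bt * r * q))
  (SF a m (- r / D0v)) (SF a a ((of_nat m * r * r + of_nat b * q * q) / D0v)) (SF a b (- q / D0v))
  (SF b m (- bt * r * q)) (SF b a (- q / D0v)) (LF b 1 (- bt * q * q)))"
  unfolding K0'_def K0_def Gi0_def one_LF zero_SF
  apply (subst B3_M3_adj, simp_all add: LFSF rp rq rr)
  apply (subst B3_M3_mult, simp_all add: LFSF rp rq rr)
  apply (subst B3_M3_mult, simp_all add: LFSF rp rq rr)
  apply (intro B3_M3_cong)
  apply (intro LF_eq SF_eq; (simp; fail)?; use D in \<open>simp add: bt_def D0v_def divide_simps\<close>; simp add: algebra_simps)+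
  done

end

lemma lin_rewrite:
  fixes E K Sg Om :: "complex mat" and z c z' :: complex
  assumes cE: "E \<in> carrier_mat N N" and cK: "K \<in> carrier_mat N N" and cS: "Sg \<in> carrier_mat N N"
    and cO: "Om \<in> carrier_mat N N"
  shows "- (E * (Sg + Om)) + z \<cdot>\<^sub>m (E * K) = 1 \<cdot>\<^sub>m (E * (z \<cdot>\<^sub>m K - Sg - Om))"
    "- (- (E * (Sg + Om)) - z \<cdot>\<^sub>m (E * K)) = 1 \<cdot>\<^sub>m (E * (z \<cdot>\<^sub>m K + Sg + Om))"
    "c * z' = -1 \<Longrightarrow> - (E * K) + (- c) \<cdot>\<^sub>m (E * (Sg + Om)) = c \<cdot>\<^sub>m (E * (z' \<cdot>\<^sub>m K - Sg - Om))"
    "c * z' = -1 \<Longrightarrow> - (E * K) - (- c) \<cdot>\<^sub>m (E * (Sg + Om)) = c \<cdot>\<^sub>m (E * (z' \<cdot>\<^sub>m K + Sg + Om))"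
proof -
  have e1: "E * (Sg + Om) = E * Sg + E * Om" by (rule mult_add_distrib_mat[OF cE cS cO])
  have e2: "\<And>w. E * (w \<cdot>\<^sub>m K - Sg - Om) = w \<cdot>\<^sub>m (E * K) - E * Sg - E * Om"
  proof -
    fix w
    have "E * (w \<cdot>\<^sub>m K - Sg - Om) = E * (w \<cdot>\<^sub>m K - Sg) - E * Om"
      by (rule mult_minus_distrib_mat[OF cE _ cO]) (use cK cS in \<open>auto intro: minus_carrier_mat\<close>)
    also have "E * (w \<cdot>\<^sub>m K - Sg) = E * (w \<cdot>\<^sub>m K) - E * Sg"
      by (rule mult_minus_distrib_mat[OF cE _ cS]) (use cK in auto)
    also have "E * (w \<cdot>\<^sub>m K) = w \<cdot>\<^sub>m (E * K)" by (rule mult_smult_distrib[OF cE cK])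
    finally show "E * (w \<cdot>\<^sub>m K - Sg - Om) = w \<cdot>\<^sub>m (E * K) - E * Sg - E * Om" .
  qed
  have e3: "\<And>w. E * (w \<cdot>\<^sub>m K + Sg + Om) = w \<cdot>\<^sub>m (E * K) + E * Sg + E * Om"
  proof -
    fix w
    have "E * (w \<cdot>\<^sub>m K + Sg + Om) = E * (w \<cdot>\<^sub>m K + Sg) + E * Om"
      by (rule mult_add_distrib_mat[OF cE _ cO]) (use cK cS in auto)
    also have "E * (w \<cdot>\<^sub>m K + Sg) = E * (w \<cdot>\<^sub>m K) + E * Sg"
      by (rule mult_add_distrib_mat[OF cE _ cS]) (use cK in auto)
    also have "E * (w \<cdot>\<^sub>m K) = w \<cdot>\<^sub>m (E * K)" by (rule mult_smult_distrib[OF cE cK])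
    finally show "E * (w \<cdot>\<^sub>m K + Sg + Om) = w \<cdot>\<^sub>m (E * K) + E * Sg + E * Om" .
  qed
  have c1: "E * K \<in> carrier_mat N N" "E * Sg \<in> carrier_mat N N" "E * Om \<in> carrier_mat N N"
    using cE cK cS cO by auto
  have g1: "\<And>X1 X2 X3 :: complex mat. X1 \<in> carrier_mat N N \<Longrightarrow> X2 \<in> carrier_mat N N \<Longrightarrow> X3 \<in> carrier_mat N N \<Longrightarrow>
     - (X2 + X3) + z \<cdot>\<^sub>m X1 = 1 \<cdot>\<^sub>m (z \<cdot>\<^sub>m X1 - X2 - X3)"
    by (intro eq_matI) auto
  have g2: "\<And>X1 X2 X3 :: complex mat. X1 \<in> carrier_mat N N \<Longrightarrow> X2 \<in> carrier_mat N N \<Longrightarrow> X3 \<in> carrier_mat N N \<Longrightarrow>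
     - (- (X2 + X3) - z \<cdot>\<^sub>m X1) = 1 \<cdot>\<^sub>m (z \<cdot>\<^sub>m X1 + X2 + X3)"
    by (intro eq_matI) auto
  show "- (E * (Sg + Om)) + z \<cdot>\<^sub>m (E * K) = 1 \<cdot>\<^sub>m (E * (z \<cdot>\<^sub>m K - Sg - Om))"
    unfolding e1 e2 using g1[OF c1] .
  show "- (- (E * (Sg + Om)) - z \<cdot>\<^sub>m (E * K)) = 1 \<cdot>\<^sub>m (E * (z \<cdot>\<^sub>m K + Sg + Om))"
    unfolding e1 e3 using g2[OF c1] .
  assume cz: "c * z' = -1"
  have cz': "\<And>x. c * (z' * x) = - x" using cz by (simp add: mult.assoc[symmetric])
  have g3: "\<And>X1 X2 X3 :: complex mat. X1 \<in> carrier_mat N N \<Longrightarrow> X2 \<in> carrier_mat N N \<Longrightarrow> X3 \<in> carrier_mat N N \<Longrightarrow>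
     - X1 + (- c) \<cdot>\<^sub>m (X2 + X3) = c \<cdot>\<^sub>m (z' \<cdot>\<^sub>m X1 - X2 - X3)"
    by (intro eq_matI) (auto simp: algebra_simps cz')
  have g4: "\<And>X1 X2 X3 :: complex mat. X1 \<in> carrier_mat N N \<Longrightarrow> X2 \<in> carrier_mat N N \<Longrightarrow> X3 \<in> carrier_mat N N \<Longrightarrow>
     - X1 - (- c) \<cdot>\<^sub>m (X2 + X3) = c \<cdot>\<^sub>m (z' \<cdot>\<^sub>m X1 + X2 + X3)"
    by (intro eq_matI) (auto simp: algebra_simps cz')
  show "- (E * K) + (- c) \<cdot>\<^sub>m (E * (Sg + Om)) = c \<cdot>\<^sub>m (E * (z' \<cdot>\<^sub>m K - Sg - Om))"
    unfolding e1 e2 using g3[OF c1] .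
  show "- (E * K) - (- c) \<cdot>\<^sub>m (E * (Sg + Om)) = c \<cdot>\<^sub>m (E * (z' \<cdot>\<^sub>m K + Sg + Om))"
    unfolding e1 e3 using g4[OF c1] .
qed


lemma mult_uminus_any: "(A :: complex mat) * (- B) = - (A * B)"
  by (intro eq_matI) (auto simp: scalar_prod_def sum_negf)

lemma i_facts: "k \<noteq> 0 \<Longrightarrow> \<i> * complex_of_real k * (- \<i> * complex_of_real (inverse k)) = 1"
  "k \<noteq> 0 \<Longrightarrow> - (\<i> * complex_of_real k) * (- \<i> * complex_of_real (inverse k)) = -1"
  "k \<noteq> 0 \<Longrightarrow> - \<i> * complex_of_real (inverse k) * (\<i> * complex_of_real k) = 1"
  by (simp_all add: field_simps of_real_inverse[symmetric] del: of_real_inverse)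

lemma lim_top: "((\<lambda>k::real. - \<i> * complex_of_real (inverse k)) \<longlongrightarrow> 0) at_top"
proof -
  have "((\<lambda>k::real. complex_of_real (inverse k)) \<longlongrightarrow> complex_of_real 0) at_top"
    by (intro tendsto_of_real tendsto_inverse_0_at_top filterlim_ident)
  hence "((\<lambda>k::real. (- \<i>) * complex_of_real (inverse k)) \<longlongrightarrow> (- \<i>) * complex_of_real 0) at_top"
    by (rule tendsto_mult_left)
  thus ?thesis by simp
qed

lemma lim_zero: "((\<lambda>k::real. \<i> * complex_of_real k) \<longlongrightarrow> 0) (at_right 0)"
proof -
  have "((\<lambda>k::real. complex_of_real k) \<longlongrightarrow> complex_of_real 0) (at_right 0)"
    by (intro tendsto_of_real tendsto_ident_at)
  hence "((\<lambda>k::real. \<i> * complex_of_real k) \<longlongrightarrow> \<i> * complex_of_real 0) (at_right 0)"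
    by (rule tendsto_mult_left)
  thus ?thesis by simp
qed

lemma inf_case:
  fixes m a b :: nat and p q r :: real and S :: "complex mat" and i j :: nat
  assumes cS: "S \<in> carrier_mat m m" and ij: "i < m + a + b" "j < m + a + b"
    and D: "1 + of_nat b * of_nat m * complex_of_real p * complex_of_real p + of_nat b * of_nat a *
      (complex_of_real q - of_nat m * complex_of_real r * complex_of_real p) *
      (complex_of_real q - of_nat m * complex_of_real r * complex_of_real p) \<noteq> 0"
  shows "((\<lambda>k. scat_PQRS m a b (SF m b (complex_of_real p)) (SF a b (complex_of_real q)) (SF a m (complex_of_real r)) S k $$ (i,j))
    \<longlongrightarrow> (- 1\<^sub>m (m+a+b) + 2 \<cdot>\<^sub>m (adj (Kinf' m a b (complex_of_real p) (complex_of_real q) (complex_of_real r))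
        * Ginf m a b (complex_of_real p) (complex_of_real q) (complex_of_real r)
        * Kinf' m a b (complex_of_real p) (complex_of_real q) (complex_of_real r))) $$ (i,j)) at_top"
proof -
  define N where "N = m + a + b"
  define P where "P = SF m b (complex_of_real p)"
  define Q where "Q = SF a b (complex_of_real q)"
  define R where "R = SF a m (complex_of_real r)"
  have cP: "P \<in> carrier_mat m b" and cQ: "Q \<in> carrier_mat a b" and cR: "R \<in> carrier_mat a m"
    unfolding P_def Q_def R_def by auto
  have ctx: "cnj (complex_of_real p) = complex_of_real p" "cnj (complex_of_real q) = complex_of_real q"
    "cnj (complex_of_real r) = complex_of_real r" by simp_all
  note ctx = ctx D
  define K where "K = Kinf m a b P Q R"
  define Sg where "Sg = Sginf m a b R S"
  define Om where "Om = Ominf m a b P Q R"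
  define Pi where "Pi = Piinf m a b"
  define E where "E = Einf m a b R"
  define Ei where "Ei = Eiinf m a b R"
  define G where "G = Gform m a b (complex_of_real p) (complex_of_real q) (complex_of_real r)"
  define Gi where "Gi = Ginf m a b (complex_of_real p) (complex_of_real q) (complex_of_real r)"
  have K': "Kinf' m a b (complex_of_real p) (complex_of_real q) (complex_of_real r) = K"
    unfolding Kinf'_def[OF ctx] K_def P_def Q_def R_def ..
  have cK: "K \<in> carrier_mat N N" and cSg: "Sg \<in> carrier_mat N N" and cOm: "Om \<in> carrier_mat N N"
    and cPi: "Pi \<in> carrier_mat N N" and cE: "E \<in> carrier_mat N N" and cEi: "Ei \<in> carrier_mat N N"
    and cGi: "Gi \<in> carrier_mat N N"
    unfolding K_def Kinf_def Sg_def Sginf_def Om_def Ominf_def Pi_def Piinf_def E_def Einf_def Ei_def Eiinf_def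
      Gi_def Ginf_def[OF ctx] N_def by simp_all
  have A: "A_PQRS m a b P Q R S = E * (Sg + Om)" unfolding E_def Sg_def Om_def using inf_A[OF cP cQ cR cS] ..
  have B: "B_PQRS m a b P Q R = E * K" unfolding E_def K_def using inf_B[OF cP cQ cR cS] ..
  define zf where "zf k = \<i> * complex_of_real k" for k :: real
  define wf where "wf k = - \<i> * complex_of_real (inverse k)" for k :: real
  have sc: "scat_PQRS m a b P Q R S k = minv (1 \<cdot>\<^sub>m (E * (zf k \<cdot>\<^sub>m K - Sg - Om))) * (1 \<cdot>\<^sub>m (E * (zf k \<cdot>\<^sub>m K + Sg + Om)))"
    for k
  proof -
    have l1: "- (E * (Sg + Om)) + zf k \<cdot>\<^sub>m (E * K) = 1 \<cdot>\<^sub>m (E * (zf k \<cdot>\<^sub>m K - Sg - Om))"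
      by (rule lin_rewrite(1)[OF cE cK cSg cOm])
    have l2: "- (E * (Sg + Om)) - zf k \<cdot>\<^sub>m (E * K) = - (1 \<cdot>\<^sub>m (E * (zf k \<cdot>\<^sub>m K + Sg + Om)))"
      using lin_rewrite(2)[OF cE cK cSg cOm, of "zf k"] by (metis uminus_uminus_mat)
    show ?thesis unfolding scat_PQRS_def Let_def A B zf_def[symmetric] l1 l2 mult_uminus_any by simp
  qed
  have lim: "((\<lambda>k. (minv (1 \<cdot>\<^sub>m (E * (zf k \<cdot>\<^sub>m K - Sg - Om))) * (1 \<cdot>\<^sub>m (E * (zf k \<cdot>\<^sub>m K + Sg + Om)))) $$ (i,j))
     \<longlongrightarrow> (- 1\<^sub>m N + 2 \<cdot>\<^sub>m (adj K * Gi * K)) $$ (i,j)) at_top"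
  proof (rule lim_core(1)[OF cK cSg cOm cPi cE cEi _ _ _ _ _ _ _ _ _ cGi])
    show "E * Ei = 1\<^sub>m N" unfolding E_def Ei_def N_def using inf_E[OF cP cQ cR cS] .
    show "Pi * K = 0\<^sub>m N N" "Pi * Sg = 0\<^sub>m N N" "Pi * Pi = Pi"
      unfolding Pi_def K_def Sg_def N_def using inf_h1[OF cP cQ cR cS] by auto
    show "Om * adj K = 0\<^sub>m N N" "Sg * adj K = Sg" "Sg * Pi = 0\<^sub>m N N" "Om * Pi = Pi"
      unfolding Pi_def K_def Sg_def Om_def N_def using inf_h2[OF cP cQ cR cS] by auto
    show "K * adj K + Pi = G" unfolding G_def Gform_def[OF ctx] K_def Pi_def P_def Q_def R_def
      by (rule G_inf[OF ctx])
    show "G * Gi = 1\<^sub>m N" unfolding G_def Gi_def N_def by (rule GGi_inf[OF ctx])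
    show "\<forall>\<^sub>F k in at_top. zf k * wf k = 1 \<and> (1::complex) \<noteq> 0"
      using eventually_gt_at_top[of "0::real"]
    proof eventually_elim
      case (elim k)
      then show ?case unfolding zf_def wf_def using i_facts(1)[of k] by simp
    qed
    show "(wf \<longlongrightarrow> 0) at_top" unfolding wf_def by (rule lim_top)
    show "i < N" "j < N" using ij N_def by auto
  qed
  show ?thesis using lim unfolding sc[symmetric] K' N_def[symmetric] Gi_def[symmetric] P_def Q_def R_def .
qed

lemma zero_case:
  fixes m a b :: nat and p q r :: real and S Si :: "complex mat" and i j :: nat
  assumes cS: "S \<in> carrier_mat m m" and cSi: "Si \<in> carrier_mat m m" and SSi: "S * Si = 1\<^sub>m m"
    and ij: "i < m + a + b" "j < m + a + b"
    and D: "1 + of_nat a * of_nat m * complex_of_real r * complex_of_real r + of_nat a * of_nat b *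
      complex_of_real q * complex_of_real q \<noteq> 0"
  shows "((\<lambda>k. scat_PQRS m a b (SF m b (complex_of_real p)) (SF a b (complex_of_real q)) (SF a m (complex_of_real r)) S k $$ (i,j))
    \<longlongrightarrow> (- (- 1\<^sub>m (m+a+b) + 2 \<cdot>\<^sub>m (adj (K0' m a b (complex_of_real q) (complex_of_real r))
        * Gi0 m a b (complex_of_real q) (complex_of_real r)
        * K0' m a b (complex_of_real q) (complex_of_real r)))) $$ (i,j)) (at_right 0)"
proof -
  define N where "N = m + a + b"
  define P where "P = SF m b (complex_of_real p)"
  define Q where "Q = SF a b (complex_of_real q)"
  define R where "R = SF a m (complex_of_real r)"
  have cP: "P \<in> carrier_mat m b" and cQ: "Q \<in> carrier_mat a b" and cR: "R \<in> carrier_mat a m"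
    unfolding P_def Q_def R_def by auto
  have ctx: "cnj (complex_of_real p) = complex_of_real p" "cnj (complex_of_real q) = complex_of_real q"
    "cnj (complex_of_real r) = complex_of_real r" by simp_all
  note ctx = ctx D
  define K where "K = K0 m a b Q R"
  define Sg where "Sg = Sg0 m a b P Si"
  define Om where "Om = Om0 m a b Q R"
  define Pi where "Pi = Pi0 m a b"
  define E where "E = E0 m a b P S"
  define Ei where "Ei = Ei0 m a b P Si"
  define G where "G = G0form m a b (complex_of_real q) (complex_of_real r)"
  define Gi where "Gi = Gi0 m a b (complex_of_real q) (complex_of_real r)"
  have K': "K0' m a b (complex_of_real q) (complex_of_real r) = K"
    unfolding K0'_def[OF ctx] K_def Q_def R_def ..
  have cK: "K \<in> carrier_mat N N" and cSg: "Sg \<in> carrier_mat N N" and cOm: "Om \<in> carrier_mat N N"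
    and cPi: "Pi \<in> carrier_mat N N" and cE: "E \<in> carrier_mat N N" and cEi: "Ei \<in> carrier_mat N N"
    and cGi: "Gi \<in> carrier_mat N N"
    unfolding K_def K0_def Sg_def Sg0_def Om_def Om0_def Pi_def Pi0_def E_def E0_def Ei_def Ei0_def
      Gi_def Gi0_def[OF ctx] N_def by simp_all
  note zz = cP cQ cR cS cSi SSi
  have A: "A_PQRS m a b P Q R S = E * K" unfolding E_def K_def using z_A[OF zz] ..
  have B: "B_PQRS m a b P Q R = E * (Sg + Om)" unfolding E_def Sg_def Om_def using z_B[OF zz] ..
  define cf where "cf k = - (\<i> * complex_of_real k)" for k :: real
  define zf where "zf k = - \<i> * complex_of_real (inverse k)" for k :: real
  define wf where "wf k = \<i> * complex_of_real k" for k :: real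
  have sc: "scat_PQRS m a b P Q R S k = - (minv (cf k \<cdot>\<^sub>m (E * (zf k \<cdot>\<^sub>m K - Sg - Om))) * (cf k \<cdot>\<^sub>m (E * (zf k \<cdot>\<^sub>m K + Sg + Om))))"
    if k: "k > 0" for k
  proof -
    have cz: "cf k * zf k = -1" unfolding cf_def zf_def using i_facts(2)[of k] k by simp
    have e: "- cf k = \<i> * complex_of_real k" unfolding cf_def by simp
    have l1: "- (E * K) + (\<i> * complex_of_real k) \<cdot>\<^sub>m (E * (Sg + Om)) = cf k \<cdot>\<^sub>m (E * (zf k \<cdot>\<^sub>m K - Sg - Om))"
      using lin_rewrite(3)[OF cE cK cSg cOm cz] unfolding e .
    have l2: "- (E * K) - (\<i> * complex_of_real k) \<cdot>\<^sub>m (E * (Sg + Om)) = cf k \<cdot>\<^sub>m (E * (zf k \<cdot>\<^sub>m K + Sg + Om))"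
      using lin_rewrite(4)[OF cE cK cSg cOm cz] unfolding e .
    show ?thesis unfolding scat_PQRS_def Let_def A B l1 l2 by simp
  qed
  have lim: "((\<lambda>k. (- (minv (cf k \<cdot>\<^sub>m (E * (zf k \<cdot>\<^sub>m K - Sg - Om))) * (cf k \<cdot>\<^sub>m (E * (zf k \<cdot>\<^sub>m K + Sg + Om))))) $$ (i,j))
     \<longlongrightarrow> (- (- 1\<^sub>m N + 2 \<cdot>\<^sub>m (adj K * Gi * K))) $$ (i,j)) (at_right 0)"
  proof (rule lim_core(2)[OF cK cSg cOm cPi cE cEi _ _ _ _ _ _ _ _ _ cGi])
    show "E * Ei = 1\<^sub>m N" unfolding E_def Ei_def N_def using z_E[OF zz] .
    show "Pi * K = 0\<^sub>m N N" "Pi * Sg = 0\<^sub>m N N" "Pi * Pi = Pi"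
      unfolding Pi_def K_def Sg_def N_def using z_h1[OF zz] by auto
    show "Om * adj K = 0\<^sub>m N N" "Sg * adj K = Sg" "Sg * Pi = 0\<^sub>m N N" "Om * Pi = Pi"
      unfolding Pi_def K_def Sg_def Om_def N_def using z_h2[OF zz] by auto
    show "K * adj K + Pi = G" unfolding G_def K_def[symmetric] Pi_def K'[symmetric]
      by (rule G0[OF ctx])
    show "G * Gi = 1\<^sub>m N" unfolding G_def Gi_def N_def by (rule GGi0[OF ctx])
    show "\<forall>\<^sub>F k in at_right 0. zf k * wf k = 1 \<and> cf k \<noteq> 0"
      using eventually_at_right_less[of "0::real"]
    proof eventually_elim
      case (elim k)
      then show ?case unfolding zf_def wf_def cf_def using i_facts(3)[of k] by simp
    qed
    show "(wf \<longlongrightarrow> 0) (at_right 0)" unfolding wf_def by (rule lim_zero)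
    show "i < N" "j < N" using ij N_def by auto
  qed
  have ev: "\<forall>\<^sub>F k in at_right 0. (- (minv (cf k \<cdot>\<^sub>m (E * (zf k \<cdot>\<^sub>m K - Sg - Om))) * (cf k \<cdot>\<^sub>m (E * (zf k \<cdot>\<^sub>m K + Sg + Om))))) $$ (i,j)
      = scat_PQRS m a b P Q R S k $$ (i,j)"
    using eventually_at_right_less[of "0::real"] by eventually_elim (simp add: sc)
  show ?thesis using tendsto_cong[OF ev] lim unfolding K' N_def[symmetric] Gi_def[symmetric] P_def Q_def R_def by simp
qed


lemma norm_lim: "(f \<longlongrightarrow> complex_of_real x) F \<Longrightarrow> \<bar>x\<bar> = y \<Longrightarrow> ((\<lambda>k. cmod (f k)) \<longlongrightarrow> y) F"
  by (metis norm_of_real tendsto_norm)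

theorem mainTheorem6:
  fixes n rA rB m a b :: nat and p q r :: real and S :: "complex mat"
  assumes "rA \<le> n" and "rB \<le> n"
    and m_def: "m = rA + rB - n" and "m \<ge> 1"
    and a_def: "a = n - rA" and "a \<ge> 1"
    and b_def: "b = n - rB" and "b \<ge> 1"
    and S_carrier: "S \<in> carrier_mat m m" and S_inv: "invertible_mat S" and S_sa: "adj S = S"
  defines "P \<equiv> complex_of_real p \<cdot>\<^sub>m ones_mat m b"
    and "Q \<equiv> complex_of_real q \<cdot>\<^sub>m ones_mat a b"
    and "R \<equiv> complex_of_real r \<cdot>\<^sub>m ones_mat a m"
    and "Dinf \<equiv> 1 + real ((n - rB) * (rA + rB - n)) * \<bar>p\<bar>^2 + real ((n - rB) * (n - rA)) * \<bar>q - real m * r * p\<bar>^2"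
    and "D0 \<equiv> 1 + real ((n - rA) * (rA + rB - n)) * \<bar>r\<bar>^2 + real ((n - rB) * (n - rA)) * \<bar>q\<bar>^2"
  shows
    "(\<forall>i j. i < m \<and> m \<le> j \<and> j < m + a \<longrightarrow>
        ((\<lambda>k. cmod (scat_PQRS m a b P Q R S k $$ (i, j)))
           \<longlongrightarrow> 2 * real (n - rB) * \<bar>p\<bar> * \<bar>q - real m * r * p\<bar> / Dinf) at_top \<and>
        ((\<lambda>k. cmod (scat_PQRS m a b P Q R S k $$ (i, j)))
           \<longlongrightarrow> 2 * \<bar>r\<bar> / D0) (at_right 0)) \<and>
     (\<forall>i j. m \<le> i \<and> i < m + a \<and> m + a \<le> j \<and> j < n \<longrightarrow>
        ((\<lambda>k. cmod (scat_PQRS m a b P Q R S k $$ (i, j)))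
           \<longlongrightarrow> 2 * \<bar>q - real m * r * p\<bar> / Dinf) at_top \<and>
        ((\<lambda>k. cmod (scat_PQRS m a b P Q R S k $$ (i, j)))
           \<longlongrightarrow> 2 * \<bar>q\<bar> / D0) (at_right 0)) \<and>
     (\<forall>i j. m + a \<le> i \<and> i < n \<and> j < m \<longrightarrow>
        ((\<lambda>k. cmod (scat_PQRS m a b P Q R S k $$ (i, j)))
           \<longlongrightarrow> 2 * \<bar>p\<bar> / Dinf) at_top \<and>
        ((\<lambda>k. cmod (scat_PQRS m a b P Q R S k $$ (i, j)))
           \<longlongrightarrow> 2 * real (n - rA) * \<bar>r\<bar> * \<bar>q\<bar> / D0) (at_right 0))"
proof -
  have nn: "n = m + a + b" "n - rB = b" "rA + rB - n = m" "n - rA = a"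
    using assms(1,2,4) m_def a_def b_def by arith+
  have PSF: "P = SF m b (complex_of_real p)" unfolding P_def SF_def ..
  have QSF: "Q = SF a b (complex_of_real q)" unfolding Q_def SF_def ..
  have RSF: "R = SF a m (complex_of_real r)" unfolding R_def SF_def ..
  obtain Si where SSi: "S * Si = 1\<^sub>m m" and SiS: "Si * S = 1\<^sub>m (dim_row Si)"
    using S_inv S_carrier unfolding invertible_mat_def inverts_mat_def by auto
  have cSi: "Si \<in> carrier_mat m m"
  proof -
    have "dim_col Si = m" using SSi S_carrier by (metis carrier_matD(1) index_mult_mat(3) index_one_mat(3))
    moreover have "dim_row Si = m" using SiS S_carrier by (metis carrier_matD(2) index_mult_mat(3) index_one_mat(3))
    ultimately show ?thesis by auto
  qed
  define s where "s = q - real m * r * p"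
  define Dr where "Dr = 1 + real b * real m * p * p + real b * real a * s * s"
  define D0r where "D0r = 1 + real a * real m * r * r + real a * real b * q * q"
  have Dr_pos: "Dr > 0" unfolding Dr_def by (simp add: add_pos_nonneg mult_nonneg_nonneg mult.assoc)
  have D0r_pos: "D0r > 0" unfolding D0r_def by (simp add: add_pos_nonneg mult_nonneg_nonneg mult.assoc)
  have Dinf_eq: "Dinf = Dr" unfolding Dinf_def Dr_def s_def nn(2-4) by (simp add: power2_eq_square)
  have D0_eq: "D0 = D0r" unfolding D0_def D0r_def nn(2-4) by (simp add: power2_eq_square algebra_simps)
  have Dc_eq: "1 + of_nat b * of_nat m * complex_of_real p * complex_of_real p + of_nat b * of_nat a *
      (complex_of_real q - of_nat m * complex_of_real r * complex_of_real p) *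
      (complex_of_real q - of_nat m * complex_of_real r * complex_of_real p) = complex_of_real Dr"
    unfolding Dr_def s_def by simp
  have D0c_eq: "1 + of_nat a * of_nat m * complex_of_real r * complex_of_real r + of_nat a * of_nat b *
      complex_of_real q * complex_of_real q = complex_of_real D0r"
    unfolding D0r_def by simp
  have ctxI: "cnj (complex_of_real p) = complex_of_real p" "cnj (complex_of_real q) = complex_of_real q"
    "cnj (complex_of_real r) = complex_of_real r"
    "1 + of_nat b * of_nat m * complex_of_real p * complex_of_real p + of_nat b * of_nat a *
      (complex_of_real q - of_nat m * complex_of_real r * complex_of_real p) *
      (complex_of_real q - of_nat m * complex_of_real r * complex_of_real p) \<noteq> 0"
    using Dc_eq Dr_pos by simp_all
  have ctx0: "cnj (complex_of_real p) = complex_of_real p" "cnj (complex_of_real q) = complex_of_real q"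
    "cnj (complex_of_real r) = complex_of_real r"
    "1 + of_nat a * of_nat m * complex_of_real r * complex_of_real r + of_nat a * of_nat b *
      complex_of_real q * complex_of_real q \<noteq> 0"
    using D0c_eq D0r_pos by simp_all
  have sv_eq: "sv m (complex_of_real p) (complex_of_real q) (complex_of_real r) = complex_of_real s"
    unfolding sv_def[OF ctxI] s_def by simp
  have Dv_eq: "Dv m a b (complex_of_real p) (complex_of_real q) (complex_of_real r) = complex_of_real Dr"
    unfolding Dv_def[OF ctxI] sv_eq Dr_def by simp
  have bet_eq: "bet m a b (complex_of_real p) (complex_of_real q) (complex_of_real r) = of_nat b / complex_of_real Dr"
    unfolding bet_def[OF ctxI] Dv_eq ..
  have D0v_eq: "D0v m a b (complex_of_real q) (complex_of_real r) = complex_of_real D0r"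
    unfolding D0v_def[OF ctx0] D0r_def by simp
  have bt_eq: "bt m a b (complex_of_real q) (complex_of_real r) = of_nat a / complex_of_real D0r"
    unfolding bt_def[OF ctx0] D0v_eq ..
  note KI = KGK_inf_blocks[OF ctxI, unfolded bet_eq Dv_eq sv_eq]
  note K0 = KGK0_blocks[OF ctx0, unfolded bt_eq D0v_eq]
  have LI: "((\<lambda>k. scat_PQRS m a b P Q R S k $$ (i,j)) \<longlongrightarrow>
      (- 1\<^sub>m (m+a+b) + 2 \<cdot>\<^sub>m (adj (Kinf' m a b (complex_of_real p) (complex_of_real q) (complex_of_real r))
        * Ginf m a b (complex_of_real p) (complex_of_real q) (complex_of_real r)
        * Kinf' m a b (complex_of_real p) (complex_of_real q) (complex_of_real r))) $$ (i,j)) at_top"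
    if "i < m + a + b" "j < m + a + b" for i j
    unfolding PSF QSF RSF by (rule inf_case[OF S_carrier that ctxI(4)])
  have L0: "((\<lambda>k. scat_PQRS m a b P Q R S k $$ (i,j)) \<longlongrightarrow>
      (- (- 1\<^sub>m (m+a+b) + 2 \<cdot>\<^sub>m (adj (K0' m a b (complex_of_real q) (complex_of_real r))
        * Gi0 m a b (complex_of_real q) (complex_of_real r)
        * K0' m a b (complex_of_real q) (complex_of_real r)))) $$ (i,j)) (at_right 0)"
    if "i < m + a + b" "j < m + a + b" for i j
    unfolding PSF QSF RSF by (rule zero_case[OF S_carrier cSi SSi that ctx0(4)])
  have c1: "((\<lambda>k. cmod (scat_PQRS m a b P Q R S k $$ (i, j))) \<longlongrightarrow> 2 * real b * \<bar>p\<bar> * \<bar>s\<bar> / Dr) at_top \<and>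
            ((\<lambda>k. cmod (scat_PQRS m a b P Q R S k $$ (i, j))) \<longlongrightarrow> 2 * \<bar>r\<bar> / D0r) (at_right 0)"
    if "i < m" "m \<le> j" "j < m + a" for i j
  proof
    have ij: "i < m + a + b" "j < m + a + b" using that by auto
    have vI: "(- 1\<^sub>m (m+a+b) + 2 \<cdot>\<^sub>m (adj (Kinf' m a b (complex_of_real p) (complex_of_real q) (complex_of_real r))
        * Ginf m a b (complex_of_real p) (complex_of_real q) (complex_of_real r)
        * Kinf' m a b (complex_of_real p) (complex_of_real q) (complex_of_real r))) $$ (i,j)
        = complex_of_real (2 * (- (real b / Dr) * p * s))"
      unfolding KI using that ij by (simp add: B3_M3_idx(1) SF_index)
    have nvI: "\<bar>2 * (- (real b / Dr) * p * s)\<bar> = 2 * real b * \<bar>p\<bar> * \<bar>s\<bar> / Dr" using Dr_pos by (simp add: abs_mult)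
    show "((\<lambda>k. cmod (scat_PQRS m a b P Q R S k $$ (i, j))) \<longlongrightarrow> 2 * real b * \<bar>p\<bar> * \<bar>s\<bar> / Dr) at_top"
      using tendsto_norm[OF LI[OF ij]] unfolding vI norm_of_real nvI .
    have v0: "(- (- 1\<^sub>m (m+a+b) + 2 \<cdot>\<^sub>m (adj (K0' m a b (complex_of_real q) (complex_of_real r))
        * Gi0 m a b (complex_of_real q) (complex_of_real r)
        * K0' m a b (complex_of_real q) (complex_of_real r)))) $$ (i,j)
        = complex_of_real (2 * (r / D0r))"
      unfolding K0 using that ij by (simp add: B3_M3_idx(1) SF_index)
    have nv0: "\<bar>2 * (r / D0r)\<bar> = 2 * \<bar>r\<bar> / D0r" using D0r_pos by (simp add: abs_mult)
    show "((\<lambda>k. cmod (scat_PQRS m a b P Q R S k $$ (i, j))) \<longlongrightarrow> 2 * \<bar>r\<bar> / D0r) (at_right 0)"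
      using tendsto_norm[OF L0[OF ij]] unfolding v0 norm_of_real nv0 .
  qed
  have c2: "((\<lambda>k. cmod (scat_PQRS m a b P Q R S k $$ (i, j))) \<longlongrightarrow> 2 * \<bar>s\<bar> / Dr) at_top \<and>
            ((\<lambda>k. cmod (scat_PQRS m a b P Q R S k $$ (i, j))) \<longlongrightarrow> 2 * \<bar>q\<bar> / D0r) (at_right 0)"
    if "m \<le> i" "i < m + a" "m + a \<le> j" "j < m + a + b" for i j
  proof
    have ij: "i < m + a + b" "j < m + a + b" using that by auto
    have vI: "(- 1\<^sub>m (m+a+b) + 2 \<cdot>\<^sub>m (adj (Kinf' m a b (complex_of_real p) (complex_of_real q) (complex_of_real r))
        * Ginf m a b (complex_of_real p) (complex_of_real q) (complex_of_real r)
        * Kinf' m a b (complex_of_real p) (complex_of_real q) (complex_of_real r))) $$ (i,j)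
        = complex_of_real (2 * (s / Dr))"
      unfolding KI using that ij by (simp add: B3_M3_idx(2) SF_index)
    have nvI: "\<bar>2 * (s / Dr)\<bar> = 2 * \<bar>s\<bar> / Dr" using Dr_pos by (simp add: abs_mult)
    show "((\<lambda>k. cmod (scat_PQRS m a b P Q R S k $$ (i, j))) \<longlongrightarrow> 2 * \<bar>s\<bar> / Dr) at_top"
      using tendsto_norm[OF LI[OF ij]] unfolding vI norm_of_real nvI .
    have v0: "(- (- 1\<^sub>m (m+a+b) + 2 \<cdot>\<^sub>m (adj (K0' m a b (complex_of_real q) (complex_of_real r))
        * Gi0 m a b (complex_of_real q) (complex_of_real r)
        * K0' m a b (complex_of_real q) (complex_of_real r)))) $$ (i,j)
        = complex_of_real (2 * (q / D0r))"
      unfolding K0 using that ij by (simp add: B3_M3_idx(2) SF_index)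
    have nv0: "\<bar>2 * (q / D0r)\<bar> = 2 * \<bar>q\<bar> / D0r" using D0r_pos by (simp add: abs_mult)
    show "((\<lambda>k. cmod (scat_PQRS m a b P Q R S k $$ (i, j))) \<longlongrightarrow> 2 * \<bar>q\<bar> / D0r) (at_right 0)"
      using tendsto_norm[OF L0[OF ij]] unfolding v0 norm_of_real nv0 .
  qed
  have c3: "((\<lambda>k. cmod (scat_PQRS m a b P Q R S k $$ (i, j))) \<longlongrightarrow> 2 * \<bar>p\<bar> / Dr) at_top \<and>
            ((\<lambda>k. cmod (scat_PQRS m a b P Q R S k $$ (i, j))) \<longlongrightarrow> 2 * real a * \<bar>r\<bar> * \<bar>q\<bar> / D0r) (at_right 0)"
    if "m + a \<le> i" "i < m + a + b" "j < m" for i j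
  proof
    have ij: "i < m + a + b" "j < m + a + b" using that by auto
    have vI: "(- 1\<^sub>m (m+a+b) + 2 \<cdot>\<^sub>m (adj (Kinf' m a b (complex_of_real p) (complex_of_real q) (complex_of_real r))
        * Ginf m a b (complex_of_real p) (complex_of_real q) (complex_of_real r)
        * Kinf' m a b (complex_of_real p) (complex_of_real q) (complex_of_real r))) $$ (i,j)
        = complex_of_real (2 * (p / Dr))"
      unfolding KI using that ij by (simp add: B3_M3_idx(3) SF_index)
    have nvI: "\<bar>2 * (p / Dr)\<bar> = 2 * \<bar>p\<bar> / Dr" using Dr_pos by (simp add: abs_mult)
    show "((\<lambda>k. cmod (scat_PQRS m a b P Q R S k $$ (i, j))) \<longlongrightarrow> 2 * \<bar>p\<bar> / Dr) at_top"
      using tendsto_norm[OF LI[OF ij]] unfolding vI norm_of_real nvI .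
    have v0: "(- (- 1\<^sub>m (m+a+b) + 2 \<cdot>\<^sub>m (adj (K0' m a b (complex_of_real q) (complex_of_real r))
        * Gi0 m a b (complex_of_real q) (complex_of_real r)
        * K0' m a b (complex_of_real q) (complex_of_real r)))) $$ (i,j)
        = complex_of_real (2 * ((real a / D0r) * r * q))"
      unfolding K0 using that ij by (simp add: B3_M3_idx(3) SF_index)
    have nv0: "\<bar>2 * ((real a / D0r) * r * q)\<bar> = 2 * real a * \<bar>r\<bar> * \<bar>q\<bar> / D0r" using D0r_pos by (simp add: abs_mult)
    show "((\<lambda>k. cmod (scat_PQRS m a b P Q R S k $$ (i, j))) \<longlongrightarrow> 2 * real a * \<bar>r\<bar> * \<bar>q\<bar> / D0r) (at_right 0)"
      using tendsto_norm[OF L0[OF ij]] unfolding v0 norm_of_real nv0 .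
  qed
  show ?thesis
    unfolding Dinf_eq D0_eq nn(2,4) s_def[symmetric]
  proof (intro conjI allI impI)
    fix i j assume h: "i < m \<and> m \<le> j \<and> j < m + a"
    show "((\<lambda>k. cmod (scat_PQRS m a b P Q R S k $$ (i, j))) \<longlongrightarrow> 2 * real b * \<bar>p\<bar> * \<bar>s\<bar> / Dr) at_top"
      "((\<lambda>k. cmod (scat_PQRS m a b P Q R S k $$ (i, j))) \<longlongrightarrow> 2 * \<bar>r\<bar> / D0r) (at_right 0)"
      using c1[of i j] h by auto
  next
    fix i j assume h: "m \<le> i \<and> i < m + a \<and> m + a \<le> j \<and> j < n"
    show "((\<lambda>k. cmod (scat_PQRS m a b P Q R S k $$ (i, j))) \<longlongrightarrow> 2 * \<bar>s\<bar> / Dr) at_top"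
      "((\<lambda>k. cmod (scat_PQRS m a b P Q R S k $$ (i, j))) \<longlongrightarrow> 2 * \<bar>q\<bar> / D0r) (at_right 0)"
      using c2[of i j] h nn(1) by auto
  next
    fix i j assume h: "m + a \<le> i \<and> i < n \<and> j < m"
    show "((\<lambda>k. cmod (scat_PQRS m a b P Q R S k $$ (i, j))) \<longlongrightarrow> 2 * \<bar>p\<bar> / Dr) at_top"
      "((\<lambda>k. cmod (scat_PQRS m a b P Q R S k $$ (i, j))) \<longlongrightarrow> 2 * real a * \<bar>r\<bar> * \<bar>q\<bar> / D0r) (at_right 0)"
      using c3[of i j] h nn(1) by auto
  qed
qed


end
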